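(* The combinatorial tiling $K$ has finite local complexity: for every $r>0$ there are only finitely many patches of $K$ of edge-diameter less than $r$, up to cell-preserving isomorphisms between subcomplexes of $K$.
   Context: A combinatorial tiling is a 2-dimensional CW-complex whose underlying space is homeomorphic to the open unit disk; faces are closed 2-cells, edges closed 1-cells, vertices 0-cells. The subdivision rule $\omega$ acts on a pentagon (closed disk with five boundary vertices $v_1,\dots,v_5$ in cyclic order, indices mod 5): add a vertex $m_i$ in the interior of each edge $v_iv_{i+1}$, five interior vertices $c_1,\dots,c_5$, edges $c_ic_{i+1}$ and $c_im_i$; the face is replaced by the central pentagon $c_1\cdots c_5$ and the five petals $v_i\,m_i\,c_i\,c_{i-1}\,m_{i-1}$. Applying $\omega$ to every face gives the subdivision of a complex. $K_0$ is one pentagon, $K_n=\omega^n(K_0)$, $\iota_n:K_n\to K_{n+1}$ is the embedding of $K_n$ onto the central superpentagon $\omega^n(\text{central face of }\omega(K_0))$ of $K_{n+1}$ (central pentagon to central pentagon), and $K$ is the direct limit of $(K_n,\iota_n)$ (undecorated). A patch is a 2-dimensional subcomplex with finitely many cells that is a union of faces connected through chains of faces sharing edges. Edge-diameter is measured with the edge-path distance between vertices. *)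

theory Defs
  imports Complex_Main "HOL-Library.FSet"
begin

text \<open>Base i: the five vertices of K0; Mid S: the vertex inserted
 in the interior of the edge with endpoint set S; Cen F i: the interior vertex c_i
 created when subdividing the face F (a face is the cyclic list of its 5 vertices).\<close>
datatype vx = Base nat | Mid "vx fset" | Cen "vx list" nat

type_synonym face = "vx list"

definition F0 :: face where "F0 = map Base [0..<5]"

definition omega_face :: "face \<Rightarrow> face set" where
  "omega_face F =
     (let m = (\<lambda>i. Mid {|F ! (i mod 5), F ! ((i + 1) mod 5)|});
          c = (\<lambda>i. Cen F (i mod 5))
      in insert (map c [0..<5])
           ((\<lambda>i. [F ! i, m i, c i, c (i + 4), m (i + 4)]) ` {0..<5}))"

definition omega :: "face set \<Rightarrow> face set" where
  "omega C = \<Union> (omega_face ` C)"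

definition Kn :: "nat \<Rightarrow> face set" where
  "Kn n = (omega ^^ n) {F0}"

definition verts :: "face set \<Rightarrow> vx set" where
  "verts C = \<Union> (set ` C)"

text \<open>The embedding iota_n : K_n \<rightarrow> K_(n+1) onto the central superpentagon, as a
 renaming of vertices (it is the same renaming for every n): v_i \<mapsto> c_i of the central
 face of omega(K0), extended structurally.\<close>
primrec rho :: "vx \<Rightarrow> vx" where
  "rho (Base i) = Cen F0 i"
| "rho (Mid S) = Mid (fimage rho S)"
| "rho (Cen L i) = Cen (map rho L) i"

text \<open>Direct limit: (n,v) and (m,w) are identified iff they have the same image in K_(n+m).\<close>
definition lim_eq :: "nat \<times> vx \<Rightarrow> nat \<times> vx \<Rightarrow> bool" where
  "lim_eq p q = ((rho ^^ fst q) (snd p) = (rho ^^ fst p) (snd q))"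

type_synonym kvert = "(nat \<times> vx) set"

definition Kcls :: "nat \<Rightarrow> vx \<Rightarrow> kvert" where
  "Kcls n v = {q. lim_eq (n, v) q}"

definition KF :: "kvert list set" where
  "KF = {map (Kcls n) F | n F. F \<in> Kn n}"

definition face_edges :: "kvert list \<Rightarrow> kvert set set" where
  "face_edges P = {{P ! i, P ! ((i + 1) mod 5)} | i. i < 5}"

definition KE :: "kvert set set" where
  "KE = \<Union> (face_edges ` KF)"

definition kwalk :: "kvert list \<Rightarrow> bool" where
  "kwalk xs = (\<forall>i. Suc i < length xs \<longrightarrow> {xs ! i, xs ! Suc i} \<in> KE)"

definition kdist :: "kvert \<Rightarrow> kvert \<Rightarrow> nat" where
  "kdist u v = (LEAST k. \<exists>xs. kwalk xs \<and> xs \<noteq> [] \<and> hd xs = u \<and> last xs = v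
                              \<and> length xs = Suc k)"

definition pverts :: "kvert list set \<Rightarrow> kvert set" where
  "pverts P = \<Union> (set ` P)"

definition pedges :: "kvert list set \<Rightarrow> kvert set set" where
  "pedges P = \<Union> (face_edges ` P)"

definition face_adj :: "kvert list \<Rightarrow> kvert list \<Rightarrow> bool" where
  "face_adj A B = (face_edges A \<inter> face_edges B \<noteq> {})"

text \<open>A patch: finite nonempty set of faces of K, connected through chains of faces
 sharing edges (the patch is the subcomplex formed by these faces with their edges and vertices).\<close>
definition patch :: "kvert list set \<Rightarrow> bool" where
  "patch P = (P \<subseteq> KF \<and> finite P \<and> P \<noteq> {} \<and>
     (\<forall>A\<in>P. \<forall>B\<in>P. (A, B) \<in> {(X, Y). X \<in> P \<and> Y \<in> P \<and> face_adj X Y}\<^sup>*))"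

definition ediam_lt :: "kvert list set \<Rightarrow> real \<Rightarrow> bool" where
  "ediam_lt P r = (\<forall>u\<in>pverts P. \<forall>v\<in>pverts P. real (kdist u v) < r)"

definition patch_iso :: "kvert list set \<Rightarrow> kvert list set \<Rightarrow> bool" where
  "patch_iso P Q = (\<exists>f. bij_betw f (pverts P) (pverts Q)
      \<and> (\<lambda>e. f ` e) ` pedges P = pedges Q
      \<and> (\<lambda>A. f ` set A) ` P = set ` Q)"

end

theory Submission
  imports Defs
begin

primrec mu :: "vx \<Rightarrow> nat" where
  "mu (Base i) = 0"
| "mu (Mid S) = Suc (Max (insert 0 (fset (fimage mu S))))"
| "mu (Cen L i) = Suc (Max (insert 0 (set (map mu L))))"

lemma Kn_Suc: "Kn (Suc n) = omega (Kn n)" by (simp add: Kn_def)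

lemma omega_face_explicit:
  "omega_face [a0,a1,a2,a3,a4] =
    {[Cen [a0,a1,a2,a3,a4] 0,Cen [a0,a1,a2,a3,a4] 1,Cen [a0,a1,a2,a3,a4] 2,Cen [a0,a1,a2,a3,a4] 3,Cen [a0,a1,a2,a3,a4] 4],
     [a0,Mid {|a0,a1|},Cen [a0,a1,a2,a3,a4] 0,Cen [a0,a1,a2,a3,a4] 4,Mid {|a4,a0|}],
     [a1,Mid {|a1,a2|},Cen [a0,a1,a2,a3,a4] 1,Cen [a0,a1,a2,a3,a4] 0,Mid {|a0,a1|}],
     [a2,Mid {|a2,a3|},Cen [a0,a1,a2,a3,a4] 2,Cen [a0,a1,a2,a3,a4] 1,Mid {|a1,a2|}],
     [a3,Mid {|a3,a4|},Cen [a0,a1,a2,a3,a4] 3,Cen [a0,a1,a2,a3,a4] 2,Mid {|a2,a3|}],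
     [a4,Mid {|a4,a0|},Cen [a0,a1,a2,a3,a4] 4,Cen [a0,a1,a2,a3,a4] 3,Mid {|a3,a4|}]}"
proof -
  have e: "{0..<5::nat} = {0,1,2,3,4}" by auto
  have u: "[0..<5] = [0,1,2,3,4::nat]" by (simp add: upt_rec)
  show ?thesis unfolding omega_face_def Let_def e u by simp
qed

lemma mu_Mid2[simp]: "mu (Mid {|x,y|}) = Suc (max (mu x) (mu y))"
  by (simp add: max_def)

lemma mu_Cen: "mu (Cen L k) = Suc (Max (insert 0 (mu ` set L)))"
  by simp

lemma all_less_5: "(\<forall>i<(5::nat). P i) = (P 0 \<and> P 1 \<and> P 2 \<and> P 3 \<and> P 4)"
  by (auto simp: less_Suc_eq numeral_eq_Suc)

lemma len5: "length G = 5 \<Longrightarrow> G = [G!0,G!1,G!2,G!3,G!4]"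
  by (auto simp: numeral_eq_Suc length_Suc_conv)

definition good :: "nat \<Rightarrow> vx list \<Rightarrow> bool" where
  "good n F = (length F = 5 \<and> distinct F \<and> (\<forall>v\<in>set F. mu v \<le> n) \<and>
      (\<forall>i<5. max (mu (F!i)) (mu (F!(Suc i mod 5))) = n))"

lemma good_explicit: "good n [a0,a1,a2,a3,a4] = (distinct [a0,a1,a2,a3,a4] \<and>
   mu a0 \<le> n \<and> mu a1 \<le> n \<and> mu a2 \<le> n \<and> mu a3 \<le> n \<and> mu a4 \<le> n \<and>
   max (mu a0) (mu a1) = n \<and> max (mu a1) (mu a2) = n \<and> max (mu a2) (mu a3) = n \<and>
   max (mu a3) (mu a4) = n \<and> max (mu a4) (mu a0) = n)"
  unfolding good_def all_less_5 by auto

lemma good_mu_Cen: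
  assumes "good n [a0,a1,a2,a3,a4]" shows "mu (Cen [a0,a1,a2,a3,a4] k) = Suc n"
proof -
  have "Max (insert 0 (mu ` set [a0,a1,a2,a3,a4])) = n"
    using assms unfolding good_explicit by (intro Max_eqI) (auto simp: max_def split: if_splits)
  thus ?thesis by simp
qed



lemma good_mus:
  assumes "good n [a0,a1,a2,a3,a4]"
  shows "mu a0 \<le> n" "mu a1 \<le> n" "mu a2 \<le> n" "mu a3 \<le> n" "mu a4 \<le> n"
    "mu (Mid {|a0,a1|}) = Suc n" "mu (Mid {|a1,a2|}) = Suc n" "mu (Mid {|a2,a3|}) = Suc n"
    "mu (Mid {|a3,a4|}) = Suc n" "mu (Mid {|a4,a0|}) = Suc n"
  using assms unfolding good_explicit by auto

lemma mu_neq: "mu x \<le> n \<Longrightarrow> mu y = Suc n \<Longrightarrow> x \<noteq> y" by auto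

lemma good_distinct15:
  assumes "good n [a0,a1,a2,a3,a4]"
  shows "distinct ([a0,a1,a2,a3,a4] @ [Mid {|a0,a1|}, Mid {|a1,a2|}, Mid {|a2,a3|}, Mid {|a3,a4|}, Mid {|a4,a0|}] @
     [Cen [a0,a1,a2,a3,a4] 0, Cen [a0,a1,a2,a3,a4] 1, Cen [a0,a1,a2,a3,a4] 2, Cen [a0,a1,a2,a3,a4] 3,
     Cen [a0,a1,a2,a3,a4] 4])" (is "distinct (?g @ ?m @ ?c)")
proof -
  note g = good_mus[OF assms] good_mu_Cen[OF assms]
  have d: "distinct ?g" using assms good_explicit by blast
  have mm: "{|a0,a1|} \<noteq> {|a1,a2|}" "{|a0,a1|} \<noteq> {|a2,a3|}" "{|a0,a1|} \<noteq> {|a3,a4|}" "{|a0,a1|} \<noteq> {|a4,a0|}"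
     "{|a1,a2|} \<noteq> {|a2,a3|}" "{|a1,a2|} \<noteq> {|a3,a4|}" "{|a1,a2|} \<noteq> {|a4,a0|}"
     "{|a2,a3|} \<noteq> {|a3,a4|}" "{|a2,a3|} \<noteq> {|a4,a0|}" "{|a3,a4|} \<noteq> {|a4,a0|}"
    using d by (auto simp: fset_eq_iff)
  have dm: "distinct ?m" using mm by simp
  have dc: "distinct ?c" by simp
  have mc: "set ?m \<inter> set ?c = {}" by simp
  have a: "\<forall>x\<in>set ?g. mu x \<le> n" using g by simp
  have b: "\<forall>x\<in>set (?m @ ?c). mu x = Suc n" using g by simp
  have gmc: "set ?g \<inter> set (?m @ ?c) = {}" using a b by fastforce
  show ?thesis unfolding distinct_append[of ?g] using d dm dc mc gmc by (simp only: distinct_append) 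
qed


definition Wf :: "vx \<Rightarrow> vx \<Rightarrow> vx \<Rightarrow> vx \<Rightarrow> vx \<Rightarrow> vx \<Rightarrow> vx \<Rightarrow> vx \<Rightarrow> vx \<Rightarrow> vx \<Rightarrow> vx \<Rightarrow> vx \<Rightarrow> vx \<Rightarrow> vx \<Rightarrow> vx \<Rightarrow> vx list set" where
 "Wf g0 g1 g2 g3 g4 m0 m1 m2 m3 m4 c0 c1 c2 c3 c4 = {[c0,c1,c2,c3,c4], [g0,m0,c0,c4,m4], [g1,m1,c1,c0,m0], [g2,m2,c2,c1,m1], [g3,m3,c3,c2,m2], [g4,m4,c4,c3,m3]}"
lemma Wf_g0:
  assumes "g0 \<notin> {g1,g2,g3,g4,m0,m1,m2,m3,m4,c0,c1,c2,c3,c4}" "F \<in> Wf g0 g1 g2 g3 g4 m0 m1 m2 m3 m4 c0 c1 c2 c3 c4" "g0 \<in> set F"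
  shows "F \<in> {[g0,m0,c0,c4,m4]}"
  using assms(2,3) unfolding Wf_def by (elim insertE emptyE; hypsubst_thin; use assms(1) in simp)

lemma Wf_g1:
  assumes "g1 \<notin> {g0,g2,g3,g4,m0,m1,m2,m3,m4,c0,c1,c2,c3,c4}" "F \<in> Wf g0 g1 g2 g3 g4 m0 m1 m2 m3 m4 c0 c1 c2 c3 c4" "g1 \<in> set F"
  shows "F \<in> {[g1,m1,c1,c0,m0]}"
  using assms(2,3) unfolding Wf_def by (elim insertE emptyE; hypsubst_thin; use assms(1) in simp)

lemma Wf_g2:
  assumes "g2 \<notin> {g0,g1,g3,g4,m0,m1,m2,m3,m4,c0,c1,c2,c3,c4}" "F \<in> Wf g0 g1 g2 g3 g4 m0 m1 m2 m3 m4 c0 c1 c2 c3 c4" "g2 \<in> set F"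
  shows "F \<in> {[g2,m2,c2,c1,m1]}"
  using assms(2,3) unfolding Wf_def by (elim insertE emptyE; hypsubst_thin; use assms(1) in simp)

lemma Wf_g3:
  assumes "g3 \<notin> {g0,g1,g2,g4,m0,m1,m2,m3,m4,c0,c1,c2,c3,c4}" "F \<in> Wf g0 g1 g2 g3 g4 m0 m1 m2 m3 m4 c0 c1 c2 c3 c4" "g3 \<in> set F"
  shows "F \<in> {[g3,m3,c3,c2,m2]}"
  using assms(2,3) unfolding Wf_def by (elim insertE emptyE; hypsubst_thin; use assms(1) in simp)

lemma Wf_g4:
  assumes "g4 \<notin> {g0,g1,g2,g3,m0,m1,m2,m3,m4,c0,c1,c2,c3,c4}" "F \<in> Wf g0 g1 g2 g3 g4 m0 m1 m2 m3 m4 c0 c1 c2 c3 c4" "g4 \<in> set F"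
  shows "F \<in> {[g4,m4,c4,c3,m3]}"
  using assms(2,3) unfolding Wf_def by (elim insertE emptyE; hypsubst_thin; use assms(1) in simp)

lemma Wf_m0:
  assumes "m0 \<notin> {g0,g1,g2,g3,g4,m1,m2,m3,m4,c0,c1,c2,c3,c4}" "F \<in> Wf g0 g1 g2 g3 g4 m0 m1 m2 m3 m4 c0 c1 c2 c3 c4" "m0 \<in> set F"
  shows "F \<in> {[g0,m0,c0,c4,m4],[g1,m1,c1,c0,m0]}"
  using assms(2,3) unfolding Wf_def by (elim insertE emptyE; hypsubst_thin; use assms(1) in simp)

lemma Wf_m1:
  assumes "m1 \<notin> {g0,g1,g2,g3,g4,m0,m2,m3,m4,c0,c1,c2,c3,c4}" "F \<in> Wf g0 g1 g2 g3 g4 m0 m1 m2 m3 m4 c0 c1 c2 c3 c4" "m1 \<in> set F"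
  shows "F \<in> {[g1,m1,c1,c0,m0],[g2,m2,c2,c1,m1]}"
  using assms(2,3) unfolding Wf_def by (elim insertE emptyE; hypsubst_thin; use assms(1) in simp)

lemma Wf_m2:
  assumes "m2 \<notin> {g0,g1,g2,g3,g4,m0,m1,m3,m4,c0,c1,c2,c3,c4}" "F \<in> Wf g0 g1 g2 g3 g4 m0 m1 m2 m3 m4 c0 c1 c2 c3 c4" "m2 \<in> set F"
  shows "F \<in> {[g2,m2,c2,c1,m1],[g3,m3,c3,c2,m2]}"
  using assms(2,3) unfolding Wf_def by (elim insertE emptyE; hypsubst_thin; use assms(1) in simp)

lemma Wf_m3:
  assumes "m3 \<notin> {g0,g1,g2,g3,g4,m0,m1,m2,m4,c0,c1,c2,c3,c4}" "F \<in> Wf g0 g1 g2 g3 g4 m0 m1 m2 m3 m4 c0 c1 c2 c3 c4" "m3 \<in> set F"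
  shows "F \<in> {[g3,m3,c3,c2,m2],[g4,m4,c4,c3,m3]}"
  using assms(2,3) unfolding Wf_def by (elim insertE emptyE; hypsubst_thin; use assms(1) in simp)

lemma Wf_m4:
  assumes "m4 \<notin> {g0,g1,g2,g3,g4,m0,m1,m2,m3,c0,c1,c2,c3,c4}" "F \<in> Wf g0 g1 g2 g3 g4 m0 m1 m2 m3 m4 c0 c1 c2 c3 c4" "m4 \<in> set F"
  shows "F \<in> {[g0,m0,c0,c4,m4],[g4,m4,c4,c3,m3]}"
  using assms(2,3) unfolding Wf_def by (elim insertE emptyE; hypsubst_thin; use assms(1) in simp)


lemma good_step:
  assumes "good n [a0,a1,a2,a3,a4]" and "F \<in> omega_face [a0,a1,a2,a3,a4]"
  shows "good (Suc n) F"
proof -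
  note g = good_mus[OF assms(1)] good_mu_Cen[OF assms(1)]
  have d: "distinct [a0,a1,a2,a3,a4, Mid {|a0,a1|}, Mid {|a1,a2|}, Mid {|a2,a3|}, Mid {|a3,a4|}, Mid {|a4,a0|},
     Cen [a0,a1,a2,a3,a4] 0, Cen [a0,a1,a2,a3,a4] 1, Cen [a0,a1,a2,a3,a4] 2, Cen [a0,a1,a2,a3,a4] 3,
     Cen [a0,a1,a2,a3,a4] 4]" using good_distinct15[OF assms(1)] by simp
  show ?thesis using assms(2) unfolding omega_face_explicit
    apply (elim insertE emptyE; hypsubst_thin)
    apply (simp_all only: good_explicit)
    using d distinct_rev[THEN iffD2, OF d] g by (simp_all add: max_def)
qed


definition mids :: "vx list \<Rightarrow> vx set" where
  "mids G = (\<lambda>k. Mid {|G!k, G!(Suc k mod 5)|}) ` {..<5}"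
definition cens :: "vx list \<Rightarrow> vx set" where
  "cens G = Cen G ` {..<5}"

lemma lt5: "{..<5::nat} = {0,1,2,3,4}" by auto

lemma mids_explicit: "mids [a0,a1,a2,a3,a4] = {Mid {|a0,a1|}, Mid {|a1,a2|}, Mid {|a2,a3|}, Mid {|a3,a4|}, Mid {|a4,a0|}}"
  unfolding mids_def lt5 by simp
lemma cens_explicit: "cens G = {Cen G 0, Cen G 1, Cen G 2, Cen G 3, Cen G 4}"
  unfolding cens_def lt5 by simp

lemma omega_Wf: "omega_face [a0,a1,a2,a3,a4] = Wf a0 a1 a2 a3 a4 (Mid {|a0,a1|}) (Mid {|a1,a2|}) (Mid {|a2,a3|}) (Mid {|a3,a4|}) (Mid {|a4,a0|})
   (Cen [a0,a1,a2,a3,a4] 0) (Cen [a0,a1,a2,a3,a4] 1) (Cen [a0,a1,a2,a3,a4] 2) (Cen [a0,a1,a2,a3,a4] 3) (Cen [a0,a1,a2,a3,a4] 4)"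
  unfolding omega_face_explicit Wf_def by simp

lemma omega_face_finite: "finite (omega_face G)" unfolding omega_face_def Let_def by simp

lemma card_ins_img5: "card (insert x (f ` {0..<(5::nat)})) \<le> 6"
proof (rule card_insert_le_m1)
  show "card (f ` {0..<(5::nat)}) \<le> 6 - 1" using card_image_le[of "{0..<(5::nat)}" f] by simp
qed simp

lemma omega_face_card: "card (omega_face G) \<le> 6"
proof -
  have "\<exists>X f. omega_face G = insert X (f ` {0..<(5::nat)})" unfolding omega_face_def Let_def by blast
  then obtain X f where "omega_face G = insert X (f ` {0..<(5::nat)})" by blast
  thus ?thesis using card_ins_img5 by simp
qed

lemma card_le1I: "finite S \<Longrightarrow> S \<subseteq> {x} \<Longrightarrow> card S \<le> 1"
  using card_mono[of "{x}" S] by simp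

lemma Wf_sub: "F \<in> Wf g0 g1 g2 g3 g4 m0 m1 m2 m3 m4 c0 c1 c2 c3 c4 \<Longrightarrow> set F \<subseteq> {g0,g1,g2,g3,g4,m0,m1,m2,m3,m4,c0,c1,c2,c3,c4}"
  unfolding Wf_def by (elim insertE emptyE; hypsubst_thin; simp only: set_simps insert_subset; simp)


lemma A1:
  assumes "distinct [g0,g1,g2,g3,g4,m0,m1,m2,m3,m4,c0,c1,c2,c3,c4]" "v \<in> {g0,g1,g2,g3,g4}"
  shows "card {F\<in>Wf g0 g1 g2 g3 g4 m0 m1 m2 m3 m4 c0 c1 c2 c3 c4. v \<in> set F} \<le> 1"
proof -
  have fin: "finite {F\<in>Wf g0 g1 g2 g3 g4 m0 m1 m2 m3 m4 c0 c1 c2 c3 c4. v \<in> set F}" unfolding Wf_def by simp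
  have c0: ?thesis if v: "v = g0"
  proof -
    have h: "g0 \<notin> {g1,g2,g3,g4,m0,m1,m2,m3,m4,c0,c1,c2,c3,c4}" using assms(1) by auto
    have "{F\<in>Wf g0 g1 g2 g3 g4 m0 m1 m2 m3 m4 c0 c1 c2 c3 c4. v \<in> set F} \<subseteq> {[g0,m0,c0,c4,m4]}" unfolding v
      apply (rule subsetI) apply (drule CollectD) apply (erule conjE) apply (drule (1) Wf_g0[OF h]) by assumption
    thus ?thesis by (intro card_le1I[OF fin])
  qed
  have c1: ?thesis if v: "v = g1"
  proof -
    have h: "g1 \<notin> {g0,g2,g3,g4,m0,m1,m2,m3,m4,c0,c1,c2,c3,c4}" using assms(1) by auto
    have "{F\<in>Wf g0 g1 g2 g3 g4 m0 m1 m2 m3 m4 c0 c1 c2 c3 c4. v \<in> set F} \<subseteq> {[g1,m1,c1,c0,m0]}" unfolding v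
      apply (rule subsetI) apply (drule CollectD) apply (erule conjE) apply (drule (1) Wf_g1[OF h]) by assumption
    thus ?thesis by (intro card_le1I[OF fin])
  qed
  have c2: ?thesis if v: "v = g2"
  proof -
    have h: "g2 \<notin> {g0,g1,g3,g4,m0,m1,m2,m3,m4,c0,c1,c2,c3,c4}" using assms(1) by auto
    have "{F\<in>Wf g0 g1 g2 g3 g4 m0 m1 m2 m3 m4 c0 c1 c2 c3 c4. v \<in> set F} \<subseteq> {[g2,m2,c2,c1,m1]}" unfolding v
      apply (rule subsetI) apply (drule CollectD) apply (erule conjE) apply (drule (1) Wf_g2[OF h]) by assumption
    thus ?thesis by (intro card_le1I[OF fin])
  qed
  have c3: ?thesis if v: "v = g3"
  proof -
    have h: "g3 \<notin> {g0,g1,g2,g4,m0,m1,m2,m3,m4,c0,c1,c2,c3,c4}" using assms(1) by auto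
    have "{F\<in>Wf g0 g1 g2 g3 g4 m0 m1 m2 m3 m4 c0 c1 c2 c3 c4. v \<in> set F} \<subseteq> {[g3,m3,c3,c2,m2]}" unfolding v
      apply (rule subsetI) apply (drule CollectD) apply (erule conjE) apply (drule (1) Wf_g3[OF h]) by assumption
    thus ?thesis by (intro card_le1I[OF fin])
  qed
  have c4: ?thesis if v: "v = g4"
  proof -
    have h: "g4 \<notin> {g0,g1,g2,g3,m0,m1,m2,m3,m4,c0,c1,c2,c3,c4}" using assms(1) by auto
    have "{F\<in>Wf g0 g1 g2 g3 g4 m0 m1 m2 m3 m4 c0 c1 c2 c3 c4. v \<in> set F} \<subseteq> {[g4,m4,c4,c3,m3]}" unfolding v
      apply (rule subsetI) apply (drule CollectD) apply (erule conjE) apply (drule (1) Wf_g4[OF h]) by assumption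
    thus ?thesis by (intro card_le1I[OF fin])
  qed
  consider "v = g0" | "v = g1" | "v = g2" | "v = g3" | "v = g4" using assms(2) by blast
  then show ?thesis proof cases
    case 1 then show ?thesis by (rule c0)
  next
    case 2 then show ?thesis by (rule c1)
  next
    case 3 then show ?thesis by (rule c2)
  next
    case 4 then show ?thesis by (rule c3)
  next
    case 5 then show ?thesis by (rule c4)
  qed
qed

lemma A3:
  assumes "distinct [g0,g1,g2,g3,g4,m0,m1,m2,m3,m4,c0,c1,c2,c3,c4]" "a \<in> {m0,m1,m2,m3,m4}" "b \<noteq> a" "b \<notin> {c0,c1,c2,c3,c4}"
  shows "card {F\<in>Wf g0 g1 g2 g3 g4 m0 m1 m2 m3 m4 c0 c1 c2 c3 c4. a \<in> set F \<and> b \<in> set F} \<le> 1"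
proof -
  have fin: "finite {F\<in>Wf g0 g1 g2 g3 g4 m0 m1 m2 m3 m4 c0 c1 c2 c3 c4. a \<in> set F \<and> b \<in> set F}" unfolding Wf_def by simp
  have c0: ?thesis if v: "a = m0"
  proof -
    have h: "m0 \<notin> {g0,g1,g2,g3,g4,m1,m2,m3,m4,c0,c1,c2,c3,c4}" using assms(1) by auto
    have s: "{F\<in>Wf g0 g1 g2 g3 g4 m0 m1 m2 m3 m4 c0 c1 c2 c3 c4. a \<in> set F \<and> b \<in> set F} \<subseteq> {[g0,m0,c0,c4,m4], [g1,m1,c1,c0,m0]}" unfolding v
      apply (rule subsetI) apply (drule CollectD) apply (elim conjE) apply (drule (1) Wf_m0[OF h]) by assumption
    have nb: "\<not> (b \<in> set [g0,m0,c0,c4,m4] \<and> b \<in> set [g1,m1,c1,c0,m0])" using assms(1,3,4) v by auto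
    show ?thesis
    proof (cases "b \<in> set [g0,m0,c0,c4,m4]")
      case True
      have "{F\<in>Wf g0 g1 g2 g3 g4 m0 m1 m2 m3 m4 c0 c1 c2 c3 c4. a \<in> set F \<and> b \<in> set F} \<subseteq> {[g0,m0,c0,c4,m4]}"
      proof (rule subsetI)
        fix F assume F: "F \<in> {F\<in>Wf g0 g1 g2 g3 g4 m0 m1 m2 m3 m4 c0 c1 c2 c3 c4. a \<in> set F \<and> b \<in> set F}"
        have "F \<in> {[g0,m0,c0,c4,m4], [g1,m1,c1,c0,m0]}" by (rule subsetD[OF s F])
        moreover have "b \<in> set F" using F by simp
        ultimately show "F \<in> {[g0,m0,c0,c4,m4]}" using True nb by auto
      qed
      thus ?thesis by (intro card_le1I[OF fin])
    next
      case False
      have "{F\<in>Wf g0 g1 g2 g3 g4 m0 m1 m2 m3 m4 c0 c1 c2 c3 c4. a \<in> set F \<and> b \<in> set F} \<subseteq> {[g1,m1,c1,c0,m0]}"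
      proof (rule subsetI)
        fix F assume F: "F \<in> {F\<in>Wf g0 g1 g2 g3 g4 m0 m1 m2 m3 m4 c0 c1 c2 c3 c4. a \<in> set F \<and> b \<in> set F}"
        have "F \<in> {[g0,m0,c0,c4,m4], [g1,m1,c1,c0,m0]}" by (rule subsetD[OF s F])
        moreover have "b \<in> set F" using F by simp
        ultimately show "F \<in> {[g1,m1,c1,c0,m0]}" using False by auto
      qed
      thus ?thesis by (intro card_le1I[OF fin])
    qed
  qed
  have c1: ?thesis if v: "a = m1"
  proof -
    have h: "m1 \<notin> {g0,g1,g2,g3,g4,m0,m2,m3,m4,c0,c1,c2,c3,c4}" using assms(1) by auto
    have s: "{F\<in>Wf g0 g1 g2 g3 g4 m0 m1 m2 m3 m4 c0 c1 c2 c3 c4. a \<in> set F \<and> b \<in> set F} \<subseteq> {[g1,m1,c1,c0,m0], [g2,m2,c2,c1,m1]}" unfolding v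
      apply (rule subsetI) apply (drule CollectD) apply (elim conjE) apply (drule (1) Wf_m1[OF h]) by assumption
    have nb: "\<not> (b \<in> set [g1,m1,c1,c0,m0] \<and> b \<in> set [g2,m2,c2,c1,m1])" using assms(1,3,4) v by auto
    show ?thesis
    proof (cases "b \<in> set [g1,m1,c1,c0,m0]")
      case True
      have "{F\<in>Wf g0 g1 g2 g3 g4 m0 m1 m2 m3 m4 c0 c1 c2 c3 c4. a \<in> set F \<and> b \<in> set F} \<subseteq> {[g1,m1,c1,c0,m0]}"
      proof (rule subsetI)
        fix F assume F: "F \<in> {F\<in>Wf g0 g1 g2 g3 g4 m0 m1 m2 m3 m4 c0 c1 c2 c3 c4. a \<in> set F \<and> b \<in> set F}"
        have "F \<in> {[g1,m1,c1,c0,m0], [g2,m2,c2,c1,m1]}" by (rule subsetD[OF s F])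
        moreover have "b \<in> set F" using F by simp
        ultimately show "F \<in> {[g1,m1,c1,c0,m0]}" using True nb by auto
      qed
      thus ?thesis by (intro card_le1I[OF fin])
    next
      case False
      have "{F\<in>Wf g0 g1 g2 g3 g4 m0 m1 m2 m3 m4 c0 c1 c2 c3 c4. a \<in> set F \<and> b \<in> set F} \<subseteq> {[g2,m2,c2,c1,m1]}"
      proof (rule subsetI)
        fix F assume F: "F \<in> {F\<in>Wf g0 g1 g2 g3 g4 m0 m1 m2 m3 m4 c0 c1 c2 c3 c4. a \<in> set F \<and> b \<in> set F}"
        have "F \<in> {[g1,m1,c1,c0,m0], [g2,m2,c2,c1,m1]}" by (rule subsetD[OF s F])
        moreover have "b \<in> set F" using F by simp
        ultimately show "F \<in> {[g2,m2,c2,c1,m1]}" using False by auto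
      qed
      thus ?thesis by (intro card_le1I[OF fin])
    qed
  qed
  have c2: ?thesis if v: "a = m2"
  proof -
    have h: "m2 \<notin> {g0,g1,g2,g3,g4,m0,m1,m3,m4,c0,c1,c2,c3,c4}" using assms(1) by auto
    have s: "{F\<in>Wf g0 g1 g2 g3 g4 m0 m1 m2 m3 m4 c0 c1 c2 c3 c4. a \<in> set F \<and> b \<in> set F} \<subseteq> {[g2,m2,c2,c1,m1], [g3,m3,c3,c2,m2]}" unfolding v
      apply (rule subsetI) apply (drule CollectD) apply (elim conjE) apply (drule (1) Wf_m2[OF h]) by assumption
    have nb: "\<not> (b \<in> set [g2,m2,c2,c1,m1] \<and> b \<in> set [g3,m3,c3,c2,m2])" using assms(1,3,4) v by auto
    show ?thesis
    proof (cases "b \<in> set [g2,m2,c2,c1,m1]")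
      case True
      have "{F\<in>Wf g0 g1 g2 g3 g4 m0 m1 m2 m3 m4 c0 c1 c2 c3 c4. a \<in> set F \<and> b \<in> set F} \<subseteq> {[g2,m2,c2,c1,m1]}"
      proof (rule subsetI)
        fix F assume F: "F \<in> {F\<in>Wf g0 g1 g2 g3 g4 m0 m1 m2 m3 m4 c0 c1 c2 c3 c4. a \<in> set F \<and> b \<in> set F}"
        have "F \<in> {[g2,m2,c2,c1,m1], [g3,m3,c3,c2,m2]}" by (rule subsetD[OF s F])
        moreover have "b \<in> set F" using F by simp
        ultimately show "F \<in> {[g2,m2,c2,c1,m1]}" using True nb by auto
      qed
      thus ?thesis by (intro card_le1I[OF fin])
    next
      case False
      have "{F\<in>Wf g0 g1 g2 g3 g4 m0 m1 m2 m3 m4 c0 c1 c2 c3 c4. a \<in> set F \<and> b \<in> set F} \<subseteq> {[g3,m3,c3,c2,m2]}"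
      proof (rule subsetI)
        fix F assume F: "F \<in> {F\<in>Wf g0 g1 g2 g3 g4 m0 m1 m2 m3 m4 c0 c1 c2 c3 c4. a \<in> set F \<and> b \<in> set F}"
        have "F \<in> {[g2,m2,c2,c1,m1], [g3,m3,c3,c2,m2]}" by (rule subsetD[OF s F])
        moreover have "b \<in> set F" using F by simp
        ultimately show "F \<in> {[g3,m3,c3,c2,m2]}" using False by auto
      qed
      thus ?thesis by (intro card_le1I[OF fin])
    qed
  qed
  have c3: ?thesis if v: "a = m3"
  proof -
    have h: "m3 \<notin> {g0,g1,g2,g3,g4,m0,m1,m2,m4,c0,c1,c2,c3,c4}" using assms(1) by auto
    have s: "{F\<in>Wf g0 g1 g2 g3 g4 m0 m1 m2 m3 m4 c0 c1 c2 c3 c4. a \<in> set F \<and> b \<in> set F} \<subseteq> {[g3,m3,c3,c2,m2], [g4,m4,c4,c3,m3]}" unfolding v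
      apply (rule subsetI) apply (drule CollectD) apply (elim conjE) apply (drule (1) Wf_m3[OF h]) by assumption
    have nb: "\<not> (b \<in> set [g3,m3,c3,c2,m2] \<and> b \<in> set [g4,m4,c4,c3,m3])" using assms(1,3,4) v by auto
    show ?thesis
    proof (cases "b \<in> set [g3,m3,c3,c2,m2]")
      case True
      have "{F\<in>Wf g0 g1 g2 g3 g4 m0 m1 m2 m3 m4 c0 c1 c2 c3 c4. a \<in> set F \<and> b \<in> set F} \<subseteq> {[g3,m3,c3,c2,m2]}"
      proof (rule subsetI)
        fix F assume F: "F \<in> {F\<in>Wf g0 g1 g2 g3 g4 m0 m1 m2 m3 m4 c0 c1 c2 c3 c4. a \<in> set F \<and> b \<in> set F}"
        have "F \<in> {[g3,m3,c3,c2,m2], [g4,m4,c4,c3,m3]}" by (rule subsetD[OF s F])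
        moreover have "b \<in> set F" using F by simp
        ultimately show "F \<in> {[g3,m3,c3,c2,m2]}" using True nb by auto
      qed
      thus ?thesis by (intro card_le1I[OF fin])
    next
      case False
      have "{F\<in>Wf g0 g1 g2 g3 g4 m0 m1 m2 m3 m4 c0 c1 c2 c3 c4. a \<in> set F \<and> b \<in> set F} \<subseteq> {[g4,m4,c4,c3,m3]}"
      proof (rule subsetI)
        fix F assume F: "F \<in> {F\<in>Wf g0 g1 g2 g3 g4 m0 m1 m2 m3 m4 c0 c1 c2 c3 c4. a \<in> set F \<and> b \<in> set F}"
        have "F \<in> {[g3,m3,c3,c2,m2], [g4,m4,c4,c3,m3]}" by (rule subsetD[OF s F])
        moreover have "b \<in> set F" using F by simp
        ultimately show "F \<in> {[g4,m4,c4,c3,m3]}" using False by auto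
      qed
      thus ?thesis by (intro card_le1I[OF fin])
    qed
  qed
  have c4: ?thesis if v: "a = m4"
  proof -
    have h: "m4 \<notin> {g0,g1,g2,g3,g4,m0,m1,m2,m3,c0,c1,c2,c3,c4}" using assms(1) by auto
    have s: "{F\<in>Wf g0 g1 g2 g3 g4 m0 m1 m2 m3 m4 c0 c1 c2 c3 c4. a \<in> set F \<and> b \<in> set F} \<subseteq> {[g0,m0,c0,c4,m4], [g4,m4,c4,c3,m3]}" unfolding v
      apply (rule subsetI) apply (drule CollectD) apply (elim conjE) apply (drule (1) Wf_m4[OF h]) by assumption
    have nb: "\<not> (b \<in> set [g4,m4,c4,c3,m3] \<and> b \<in> set [g0,m0,c0,c4,m4])" using assms(1,3,4) v by auto
    show ?thesis
    proof (cases "b \<in> set [g4,m4,c4,c3,m3]")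
      case True
      have "{F\<in>Wf g0 g1 g2 g3 g4 m0 m1 m2 m3 m4 c0 c1 c2 c3 c4. a \<in> set F \<and> b \<in> set F} \<subseteq> {[g4,m4,c4,c3,m3]}"
      proof (rule subsetI)
        fix F assume F: "F \<in> {F\<in>Wf g0 g1 g2 g3 g4 m0 m1 m2 m3 m4 c0 c1 c2 c3 c4. a \<in> set F \<and> b \<in> set F}"
        have "F \<in> {[g0,m0,c0,c4,m4], [g4,m4,c4,c3,m3]}" by (rule subsetD[OF s F])
        moreover have "b \<in> set F" using F by simp
        ultimately show "F \<in> {[g4,m4,c4,c3,m3]}" using True nb by auto
      qed
      thus ?thesis by (intro card_le1I[OF fin])
    next
      case False
      have "{F\<in>Wf g0 g1 g2 g3 g4 m0 m1 m2 m3 m4 c0 c1 c2 c3 c4. a \<in> set F \<and> b \<in> set F} \<subseteq> {[g0,m0,c0,c4,m4]}"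
      proof (rule subsetI)
        fix F assume F: "F \<in> {F\<in>Wf g0 g1 g2 g3 g4 m0 m1 m2 m3 m4 c0 c1 c2 c3 c4. a \<in> set F \<and> b \<in> set F}"
        have "F \<in> {[g0,m0,c0,c4,m4], [g4,m4,c4,c3,m3]}" by (rule subsetD[OF s F])
        moreover have "b \<in> set F" using F by simp
        ultimately show "F \<in> {[g0,m0,c0,c4,m4]}" using False by auto
      qed
      thus ?thesis by (intro card_le1I[OF fin])
    qed
  qed
  consider "a = m0" | "a = m1" | "a = m2" | "a = m3" | "a = m4" using assms(2) by blast
  then show ?thesis proof cases
    case 1 then show ?thesis by (rule c0)
  next
    case 2 then show ?thesis by (rule c1)
  next
    case 3 then show ?thesis by (rule c2)
  next
    case 4 then show ?thesis by (rule c3)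
  next
    case 5 then show ?thesis by (rule c4)
  qed
qed

lemma A4h:
  assumes "distinct [g0,g1,g2,g3,g4,m0,m1,m2,m3,m4,c0,c1,c2,c3,c4]" "x \<in> {g0,g1,g2,g3,g4}"
    "F \<in> Wf g0 g1 g2 g3 g4 m0 m1 m2 m3 m4 c0 c1 c2 c3 c4" "x \<in> set F"
  shows "x = hd F"
proof -
  have c0: "x = hd F" if v: "x = g0" and xF: "x \<in> set F"
  proof -
    have h: "g0 \<notin> {g1,g2,g3,g4,m0,m1,m2,m3,m4,c0,c1,c2,c3,c4}" using assms(1) by auto
    have "F \<in> {[g0,m0,c0,c4,m4]}" using Wf_g0[OF h assms(3)] xF v by simp
    thus ?thesis using v by simp
  qed
  have c1: "x = hd F" if v: "x = g1" and xF: "x \<in> set F"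
  proof -
    have h: "g1 \<notin> {g0,g2,g3,g4,m0,m1,m2,m3,m4,c0,c1,c2,c3,c4}" using assms(1) by auto
    have "F \<in> {[g1,m1,c1,c0,m0]}" using Wf_g1[OF h assms(3)] xF v by simp
    thus ?thesis using v by simp
  qed
  have c2: "x = hd F" if v: "x = g2" and xF: "x \<in> set F"
  proof -
    have h: "g2 \<notin> {g0,g1,g3,g4,m0,m1,m2,m3,m4,c0,c1,c2,c3,c4}" using assms(1) by auto
    have "F \<in> {[g2,m2,c2,c1,m1]}" using Wf_g2[OF h assms(3)] xF v by simp
    thus ?thesis using v by simp
  qed
  have c3: "x = hd F" if v: "x = g3" and xF: "x \<in> set F"
  proof -
    have h: "g3 \<notin> {g0,g1,g2,g4,m0,m1,m2,m3,m4,c0,c1,c2,c3,c4}" using assms(1) by auto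
    have "F \<in> {[g3,m3,c3,c2,m2]}" using Wf_g3[OF h assms(3)] xF v by simp
    thus ?thesis using v by simp
  qed
  have c4: "x = hd F" if v: "x = g4" and xF: "x \<in> set F"
  proof -
    have h: "g4 \<notin> {g0,g1,g2,g3,m0,m1,m2,m3,m4,c0,c1,c2,c3,c4}" using assms(1) by auto
    have "F \<in> {[g4,m4,c4,c3,m3]}" using Wf_g4[OF h assms(3)] xF v by simp
    thus ?thesis using v by simp
  qed
  consider "x = g0" | "x = g1" | "x = g2" | "x = g3" | "x = g4" using assms(2) by blast
  then show ?thesis proof cases
    case 1 then show ?thesis using c0 assms(4) by blast
  next
    case 2 then show ?thesis using c1 assms(4) by blast
  next
    case 3 then show ?thesis using c2 assms(4) by blast
  next
    case 4 then show ?thesis using c3 assms(4) by blast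
  next
    case 5 then show ?thesis using c4 assms(4) by blast
  qed
qed

lemma A4:
  assumes "distinct [g0,g1,g2,g3,g4,m0,m1,m2,m3,m4,c0,c1,c2,c3,c4]" "a \<in> {g0,g1,g2,g3,g4}" "b \<in> {g0,g1,g2,g3,g4}" "a \<noteq> b"
    "F \<in> Wf g0 g1 g2 g3 g4 m0 m1 m2 m3 m4 c0 c1 c2 c3 c4" "a \<in> set F" "b \<in> set F"
  shows False
  using A4h[OF assms(1,2,5,6)] A4h[OF assms(1,3,5,7)] assms(4) by simp


lemma good_len: "good n G \<Longrightarrow> length G = 5" by (simp add: good_def)

lemma good_split: "good n G \<Longrightarrow> \<exists>a0 a1 a2 a3 a4. G = [a0,a1,a2,a3,a4]"
  using len5 good_len by metis

lemma union15:
  "set [a0,a1,a2,a3,a4] \<union> mids [a0,a1,a2,a3,a4] \<union> cens [a0,a1,a2,a3,a4] =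
   {a0,a1,a2,a3,a4, Mid {|a0,a1|}, Mid {|a1,a2|}, Mid {|a2,a3|}, Mid {|a3,a4|}, Mid {|a4,a0|},
     Cen [a0,a1,a2,a3,a4] 0, Cen [a0,a1,a2,a3,a4] 1, Cen [a0,a1,a2,a3,a4] 2, Cen [a0,a1,a2,a3,a4] 3,
     Cen [a0,a1,a2,a3,a4] 4}"
  by (simp only: set_simps mids_explicit cens_explicit Un_insert_left Un_empty_left)

lemma d15:
  assumes "good n [a0,a1,a2,a3,a4]"
  shows "distinct [a0,a1,a2,a3,a4, Mid {|a0,a1|}, Mid {|a1,a2|}, Mid {|a2,a3|}, Mid {|a3,a4|}, Mid {|a4,a0|},
     Cen [a0,a1,a2,a3,a4] 0, Cen [a0,a1,a2,a3,a4] 1, Cen [a0,a1,a2,a3,a4] 2, Cen [a0,a1,a2,a3,a4] 3,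
     Cen [a0,a1,a2,a3,a4] 4]" using good_distinct15[OF assms] by simp

lemma LLv:
  assumes "good n G" "F \<in> omega_face G"
  shows "set F \<subseteq> set G \<union> mids G \<union> cens G"
proof -
  obtain a0 a1 a2 a3 a4 where G: "G = [a0,a1,a2,a3,a4]" using good_split[OF assms(1)] by blast
  show ?thesis unfolding G union15 using assms(2) unfolding G omega_Wf by (rule Wf_sub)
qed

lemma CL1:
  assumes "good n G" "v \<in> set G"
  shows "card {F\<in>omega_face G. v \<in> set F} \<le> 1"
proof -
  obtain a0 a1 a2 a3 a4 where G: "G = [a0,a1,a2,a3,a4]" using good_split[OF assms(1)] by blast
  note d = d15[OF assms(1)[unfolded G]]
  show ?thesis unfolding G omega_Wf by (rule A1[OF d]) (use assms(2) G in simp)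
qed

lemma CL3:
  assumes "good n G" "a \<in> mids G" "b \<noteq> a" "b \<notin> cens G"
  shows "card {F\<in>omega_face G. a \<in> set F \<and> b \<in> set F} \<le> 1"
proof -
  obtain a0 a1 a2 a3 a4 where G: "G = [a0,a1,a2,a3,a4]" using good_split[OF assms(1)] by blast
  note d = d15[OF assms(1)[unfolded G]]
  have a: "a \<in> {Mid {|a0,a1|}, Mid {|a1,a2|}, Mid {|a2,a3|}, Mid {|a3,a4|}, Mid {|a4,a0|}}"
    using assms(2) unfolding G mids_explicit .
  have b: "b \<notin> {Cen [a0,a1,a2,a3,a4] 0, Cen [a0,a1,a2,a3,a4] 1, Cen [a0,a1,a2,a3,a4] 2, Cen [a0,a1,a2,a3,a4] 3,
     Cen [a0,a1,a2,a3,a4] 4}" using assms(4) unfolding G cens_explicit .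
  show ?thesis unfolding G omega_Wf by (rule A3[OF d a assms(3) b])
qed

lemma CL4:
  assumes "good n G" "a \<in> set G" "b \<in> set G" "a \<noteq> b" "F \<in> omega_face G" "a \<in> set F" "b \<in> set F"
  shows False
proof -
  obtain a0 a1 a2 a3 a4 where G: "G = [a0,a1,a2,a3,a4]" using good_split[OF assms(1)] by blast
  note d = d15[OF assms(1)[unfolded G]]
  have a: "a \<in> {a0,a1,a2,a3,a4}" using assms(2) G by simp
  have b: "b \<in> {a0,a1,a2,a3,a4}" using assms(3) G by simp
  have F: "F \<in> Wf a0 a1 a2 a3 a4 (Mid {|a0,a1|}) (Mid {|a1,a2|}) (Mid {|a2,a3|}) (Mid {|a3,a4|}) (Mid {|a4,a0|})
   (Cen [a0,a1,a2,a3,a4] 0) (Cen [a0,a1,a2,a3,a4] 1) (Cen [a0,a1,a2,a3,a4] 2) (Cen [a0,a1,a2,a3,a4] 3) (Cen [a0,a1,a2,a3,a4] 4)"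
    using assms(5) unfolding G omega_Wf .
  show False by (rule A4[OF d a b assms(4) F assms(6,7)])
qed

lemma good_new_mu:
  assumes "good n G" "v \<in> mids G \<union> cens G"
  shows "mu v = Suc n"
proof -
  obtain a0 a1 a2 a3 a4 where G: "G = [a0,a1,a2,a3,a4]" using good_split[OF assms(1)] by blast
  note g = good_mus[OF assms(1)[unfolded G]] good_mu_Cen[OF assms(1)[unfolded G]]
  show ?thesis using assms(2) unfolding G mids_explicit cens_explicit
    by (elim UnE insertE emptyE; simp only: g)
qed

lemma good_old_mu: "good n G \<Longrightarrow> v \<in> set G \<Longrightarrow> mu v \<le> n"
  by (simp add: good_def)

lemma good_mids_elems:
  assumes "good n G" "Mid X \<in> mids G"
  shows "\<exists>x y. x \<noteq> y \<and> X = {|x,y|} \<and> x \<in> set G \<and> y \<in> set G"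
proof -
  obtain a0 a1 a2 a3 a4 where G: "G = [a0,a1,a2,a3,a4]" using good_split[OF assms(1)] by blast
  have d: "distinct [a0,a1,a2,a3,a4]" using assms(1) G good_def by simp
  have h: "\<And>x y. x \<noteq> y \<Longrightarrow> x \<in> set G \<Longrightarrow> y \<in> set G \<Longrightarrow> X = {|x,y|} \<Longrightarrow>
     \<exists>x y. x \<noteq> y \<and> X = {|x,y|} \<and> x \<in> set G \<and> y \<in> set G" by blast
  have "X = {|a0,a1|} \<or> X = {|a1,a2|} \<or> X = {|a2,a3|} \<or> X = {|a3,a4|} \<or> X = {|a4,a0|}"
    using assms(2) unfolding G mids_explicit by simp
  thus ?thesis
  proof (elim disjE)
    assume "X = {|a0,a1|}" thus ?thesis using d by (intro h[of a0 a1]) (simp_all add: G)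
  next
    assume "X = {|a1,a2|}" thus ?thesis using d by (intro h[of a1 a2]) (simp_all add: G)
  next
    assume "X = {|a2,a3|}" thus ?thesis using d by (intro h[of a2 a3]) (simp_all add: G)
  next
    assume "X = {|a3,a4|}" thus ?thesis using d by (intro h[of a3 a4]) (simp_all add: G)
  next
    assume "X = {|a4,a0|}" thus ?thesis using d by (intro h[of a4 a0]) (auto simp: G)
  qed
qed

lemma mids_cens_ne: "Mid X \<notin> cens G" "Cen L k \<notin> mids G"
  by (auto simp: mids_def cens_def)

lemma cens_inj: "Cen L k \<in> cens G \<Longrightarrow> L = G"
  by (auto simp: cens_def)

lemma base_mu: "mu (Base i) = 0" by simp


definition Inv :: "nat \<Rightarrow> bool" where
 "Inv n = (finite (Kn n) \<and> (\<forall>F\<in>Kn n. good n F) \<and> (\<forall>v. card {F\<in>Kn n. v \<in> set F} \<le> 36) \<and>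
     (\<forall>a b. a \<noteq> b \<longrightarrow> card {F\<in>Kn n. a \<in> set F \<and> b \<in> set F} \<le> 6))"

lemma Kn_Suc_Collect: "{F\<in>Kn (Suc n). Q F} = (\<Union>G\<in>Kn n. {F\<in>omega_face G. Q F})"
  by (auto simp: Kn_Suc omega_def)

lemma CU:
  assumes "finite A" "T \<subseteq> A" "\<And>G. G \<in> A \<Longrightarrow> G \<notin> T \<Longrightarrow> S G = {}" "\<And>G. G \<in> T \<Longrightarrow> card (S G) \<le> c"
  shows "card (\<Union>G\<in>A. S G) \<le> card T * c"
proof -
  have fT: "finite T" using assms(1,2) finite_subset by blast
  have "(\<Union>G\<in>A. S G) = (\<Union>G\<in>T. S G)" using assms(2,3) by blast
  hence "card (\<Union>G\<in>A. S G) \<le> (\<Sum>G\<in>T. card (S G))" using card_UN_le[OF fT] by simp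
  also have "\<dots> \<le> card T * c" using sum_bounded_above[of T "\<lambda>G. card (S G)" c] assms(4) by simp
  finally show ?thesis .
qed

lemma vert_cases:
  assumes "good n G" "F \<in> omega_face G" "v \<in> set F"
  shows "v \<in> set G \<or> v \<in> mids G \<or> v \<in> cens G"
  using LLv[OF assms(1,2)] assms(3) by blast

lemma card_sub_omega: "card {F\<in>omega_face G. P F} \<le> 6"
  by (rule le_trans[OF card_mono[OF omega_face_finite] omega_face_card]) auto

lemma fdoub: "{|x,y|} = {|x',y'|} \<Longrightarrow> x \<in> {x',y'} \<and> y \<in> {x',y'}"
proof -
  assume e: "{|x,y|} = {|x',y'|}"
  have "x |\<in>| {|x',y'|}" "y |\<in>| {|x',y'|}" by (simp_all add: e[symmetric])
  thus ?thesis by auto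
qed

lemma mids_T_bound:
  assumes gd: "\<forall>G\<in>Kn n. good n G" and fin: "finite (Kn n)" and pc: "\<forall>a b. a \<noteq> b \<longrightarrow> card {F\<in>Kn n. a \<in> set F \<and> b \<in> set F} \<le> 6"
    and L: "L \<in> Kn n" "v \<in> mids L"
  shows "card {G\<in>Kn n. v \<in> mids G} \<le> 6"
proof -
  obtain X where X: "v = Mid X" using L(2) by (auto simp: mids_def)
  obtain x y where xy: "x \<noteq> y" "X = {|x,y|}" using good_mids_elems[OF gd[rule_format, OF L(1)] L(2)[unfolded X]] by blast
  have "{G\<in>Kn n. v \<in> mids G} \<subseteq> {F\<in>Kn n. x \<in> set F \<and> y \<in> set F}"
  proof
    fix G assume G: "G \<in> {G\<in>Kn n. v \<in> mids G}"
    hence G1: "G \<in> Kn n" and G2: "Mid X \<in> mids G" using X by simp_all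
    obtain x' y' where "X = {|x',y'|}" "x' \<in> set G" "y' \<in> set G"
      using good_mids_elems[OF gd[rule_format, OF G1] G2] by blast
    thus "G \<in> {F\<in>Kn n. x \<in> set F \<and> y \<in> set F}" using fdoub[of x y x' y'] xy G by auto
  qed
  hence "card {G\<in>Kn n. v \<in> mids G} \<le> card {F\<in>Kn n. x \<in> set F \<and> y \<in> set F}"
    using fin by (intro card_mono) auto
  thus ?thesis using pc[rule_format, OF xy(1)] by linarith
qed

lemma VS:
  assumes "Inv n"
  shows "card {F\<in>Kn (Suc n). v \<in> set F} \<le> 36"
proof -
  have fin: "finite (Kn n)" and gd: "\<forall>G\<in>Kn n. good n G"
    and fc: "\<forall>v. card {F\<in>Kn n. v \<in> set F} \<le> 36"
    and pc: "\<forall>a b. a \<noteq> b \<longrightarrow> card {F\<in>Kn n. a \<in> set F \<and> b \<in> set F} \<le> 6"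
    using assms unfolding Inv_def by blast+
  define S where "S G = {F\<in>omega_face G. v \<in> set F}" for G
  have eq: "{F\<in>Kn (Suc n). v \<in> set F} = (\<Union>G\<in>Kn n. S G)" by (simp add: Kn_Suc_Collect S_def)
  have inS: "v \<in> set G \<or> v \<in> mids G \<or> v \<in> cens G" if "G \<in> Kn n" "S G \<noteq> {}" for G
    using that vert_cases[OF gd[rule_format, OF that(1)]] unfolding S_def by blast
  have c6: "card (S G) \<le> 6" for G unfolding S_def by (rule card_sub_omega)
  show ?thesis unfolding eq
  proof (cases "mu v \<le> n")
    case True
    have "card (\<Union>G\<in>Kn n. S G) \<le> card {G\<in>Kn n. v \<in> set G} * 1"
    proof (rule CU[OF fin])
      fix G assume G: "G \<in> Kn n" "G \<notin> {G\<in>Kn n. v \<in> set G}"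
      show "S G = {}"
      proof (rule ccontr)
        assume "S G \<noteq> {}"
        hence "v \<in> mids G \<union> cens G" using inS G by blast
        hence "mu v = Suc n" using good_new_mu gd G by blast
        thus False using True by simp
      qed
    next
      fix G assume "G \<in> {G\<in>Kn n. v \<in> set G}"
      thus "card (S G) \<le> 1" unfolding S_def using CL1 gd by blast
    qed auto
    thus "card (\<Union>G\<in>Kn n. S G) \<le> 36" using fc[rule_format, of v] by linarith
  next
    case big: False
    have nold: "v \<notin> set G" if "G \<in> Kn n" for G
    proof
      assume "v \<in> set G"
      then have "mu v \<le> n" by (rule good_old_mu[OF gd[rule_format, OF that]])
      with big show False by simp
    qed
    show "card (\<Union>G\<in>Kn n. S G) \<le> 36"
    proof (cases "\<exists>L\<in>Kn n. v \<in> cens L")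
      case True
      then obtain L where L: "L \<in> Kn n" "v \<in> cens L" by blast
      then obtain k where k: "v = Cen L k" by (auto simp: cens_def)
      have "card (\<Union>G\<in>Kn n. S G) \<le> card {L} * 6"
      proof (rule CU[OF fin])
        fix G assume G: "G \<in> Kn n" "G \<notin> {L}"
        show "S G = {}"
        proof (rule ccontr)
          assume "S G \<noteq> {}"
          hence "v \<in> cens G" using inS G nold mids_cens_ne k by blast
          thus False using cens_inj k G by blast
        qed
      qed (use L c6 in auto)
      thus ?thesis by simp
    next
      case noc: False
      show ?thesis
      proof (cases "\<exists>L\<in>Kn n. v \<in> mids L")
        case True
        then obtain L where L: "L \<in> Kn n" "v \<in> mids L" by blast
        have "card (\<Union>G\<in>Kn n. S G) \<le> card {G\<in>Kn n. v \<in> mids G} * 6"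
        proof (rule CU[OF fin])
          fix G assume G: "G \<in> Kn n" "G \<notin> {G\<in>Kn n. v \<in> mids G}"
          show "S G = {}" using inS G nold noc by blast
        qed (use c6 in auto)
        moreover have "card {G\<in>Kn n. v \<in> mids G} \<le> 6" by (rule mids_T_bound[OF gd fin pc L])
        ultimately show ?thesis using mult_le_mono1[of "card {G\<in>Kn n. v \<in> mids G}" 6 6] by linarith
      next
        case nom: False
        have "(\<Union>G\<in>Kn n. S G) = {}" using inS nold noc nom by blast
        thus ?thesis by simp
      qed
    qed
  qed
qed


lemma Inv_parts:
  assumes "Inv n"
  shows "finite (Kn n)" "\<forall>G\<in>Kn n. good n G" "\<forall>v. card {F\<in>Kn n. v \<in> set F} \<le> 36"
    "\<forall>a b. a \<noteq> b \<longrightarrow> card {F\<in>Kn n. a \<in> set F \<and> b \<in> set F} \<le> 6"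
  using assms unfolding Inv_def by blast+

lemma PK1:
  assumes "Inv n" "L \<in> Kn n" "a \<in> cens L"
  shows "card {F\<in>Kn (Suc n). a \<in> set F \<and> b \<in> set F} \<le> 6"
proof -
  note fin = Inv_parts(1)[OF assms(1)] and gd = Inv_parts(2)[OF assms(1)]
  define S where "S G = {F\<in>omega_face G. a \<in> set F \<and> b \<in> set F}" for G
  have eq: "{F\<in>Kn (Suc n). a \<in> set F \<and> b \<in> set F} = (\<Union>G\<in>Kn n. S G)" by (simp add: Kn_Suc_Collect S_def)
  obtain k where k: "a = Cen L k" using assms(3) by (auto simp: cens_def)
  have mua: "mu a = Suc n" using good_new_mu[OF gd[rule_format, OF assms(2)]] assms(3) by blast
  have "card (\<Union>G\<in>Kn n. S G) \<le> card {L} * 6"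
  proof (rule CU[OF fin])
    fix G assume G: "G \<in> Kn n" "G \<notin> {L}"
    show "S G = {}"
    proof (rule ccontr)
      assume "S G \<noteq> {}"
      then obtain F where F: "F \<in> omega_face G" "a \<in> set F" unfolding S_def by blast
      have "a \<in> set G \<or> a \<in> mids G \<or> a \<in> cens G" by (rule vert_cases[OF gd[rule_format, OF G(1)] F])
      moreover have "a \<notin> set G"
      proof
        assume "a \<in> set G" hence "mu a \<le> n" by (rule good_old_mu[OF gd[rule_format, OF G(1)]])
        thus False using mua by simp
      qed
      moreover have "a \<notin> mids G" using k mids_cens_ne by blast
      moreover have "a \<notin> cens G" using k cens_inj G by blast
      ultimately show False by blast
    qed
  next
    fix G show "card (S G) \<le> 6" unfolding S_def by (rule card_sub_omega)
  qed (use assms(2) in auto)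
  thus ?thesis unfolding eq by simp
qed

lemma PK2:
  assumes "Inv n" "n < mu a" "\<forall>G\<in>Kn n. a \<notin> cens G" "\<forall>G\<in>Kn n. b \<notin> cens G" "a \<noteq> b"
  shows "card {F\<in>Kn (Suc n). a \<in> set F \<and> b \<in> set F} \<le> 6"
proof -
  note fin = Inv_parts(1)[OF assms(1)] and gd = Inv_parts(2)[OF assms(1)] and pc = Inv_parts(4)[OF assms(1)]
  define S where "S G = {F\<in>omega_face G. a \<in> set F \<and> b \<in> set F}" for G
  have eq: "{F\<in>Kn (Suc n). a \<in> set F \<and> b \<in> set F} = (\<Union>G\<in>Kn n. S G)" by (simp add: Kn_Suc_Collect S_def)
  have nold: "a \<notin> set G" if "G \<in> Kn n" for G
  proof
    assume "a \<in> set G"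
    then have "mu a \<le> n" by (rule good_old_mu[OF gd[rule_format, OF that]])
    with assms(2) show False by simp
  qed
  have inS: "a \<in> mids G" if "G \<in> Kn n" "S G \<noteq> {}" for G
  proof -
    from that(2) obtain F where F: "F \<in> omega_face G" "a \<in> set F" unfolding S_def by blast
    have "a \<in> set G \<or> a \<in> mids G \<or> a \<in> cens G" by (rule vert_cases[OF gd[rule_format, OF that(1)] F])
    thus ?thesis using nold[OF that(1)] assms(3) that(1) by blast
  qed
  show ?thesis
  proof (cases "\<exists>L\<in>Kn n. a \<in> mids L")
    case True
    then obtain L where L: "L \<in> Kn n" "a \<in> mids L" by blast
    have "card (\<Union>G\<in>Kn n. S G) \<le> card {G\<in>Kn n. a \<in> mids G} * 1"
    proof (rule CU[OF fin])
      fix G assume G: "G \<in> Kn n" "G \<notin> {G\<in>Kn n. a \<in> mids G}"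
      show "S G = {}" using inS G by blast
    next
      fix G assume G: "G \<in> {G\<in>Kn n. a \<in> mids G}"
      hence G1: "G \<in> Kn n" and G2: "a \<in> mids G" by simp_all
      have "b \<notin> cens G" using assms(4) G1 by blast
      thus "card (S G) \<le> 1" unfolding S_def by (rule CL3[OF gd[rule_format, OF G1] G2 assms(5)[symmetric]])
    qed auto
    moreover have "card {G\<in>Kn n. a \<in> mids G} \<le> 6" by (rule mids_T_bound[OF gd fin pc L])
    ultimately show ?thesis unfolding eq by linarith
  next
    case False
    have "(\<Union>G\<in>Kn n. S G) = {}" using inS False by blast
    thus ?thesis unfolding eq by simp
  qed
qed

lemma sym_pair: "{F\<in>K. a \<in> set F \<and> b \<in> set F} = {F\<in>K. b \<in> set F \<and> a \<in> set F}" by blast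

lemma PS:
  assumes "Inv n" "a \<noteq> b"
  shows "card {F\<in>Kn (Suc n). a \<in> set F \<and> b \<in> set F} \<le> 6"
proof -
  have e: "{F\<in>Kn (Suc n). a \<in> set F \<and> b \<in> set F} = {F\<in>Kn (Suc n). b \<in> set F \<and> a \<in> set F}" by blast
  show ?thesis
  proof (cases "\<exists>L\<in>Kn n. a \<in> cens L")
    case True
    then obtain L where L: "L \<in> Kn n" "a \<in> cens L" by blast
    show ?thesis by (rule PK1[OF assms(1) L])
  next
    case nca: False
    show ?thesis
    proof (cases "\<exists>L\<in>Kn n. b \<in> cens L")
      case True
      then obtain L where L: "L \<in> Kn n" "b \<in> cens L" by blast
      show ?thesis unfolding e by (rule PK1[OF assms(1) L])
    next
      case ncb: False
      have nca': "\<forall>G\<in>Kn n. a \<notin> cens G" using nca by blast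
      have ncb': "\<forall>G\<in>Kn n. b \<notin> cens G" using ncb by blast
      show ?thesis
      proof (cases "n < mu a")
        case True thus ?thesis by (rule PK2[OF assms(1) _ nca' ncb' assms(2)])
      next
        case sa: False
        show ?thesis
        proof (cases "n < mu b")
          case True
          show ?thesis unfolding e by (rule PK2[OF assms(1) True ncb' nca' assms(2)[symmetric]])
        next
          case sb: False
          note gd = Inv_parts(2)[OF assms(1)]
          have "{F\<in>Kn (Suc n). a \<in> set F \<and> b \<in> set F} = {}"
          proof (rule ccontr)
            assume "{F\<in>Kn (Suc n). a \<in> set F \<and> b \<in> set F} \<noteq> {}"
            then obtain F where F0: "F \<in> Kn (Suc n)" "a \<in> set F" "b \<in> set F" by blast
            then obtain G where G: "G \<in> Kn n" and F1: "F \<in> omega_face G"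
              unfolding Kn_Suc omega_def by blast
            note gG = gd[rule_format, OF G]
            have old: "x \<in> set G" if x: "\<not> n < mu x" "x \<in> set F" for x
            proof -
              have "x \<in> set G \<or> x \<in> mids G \<or> x \<in> cens G" by (rule vert_cases[OF gG F1 x(2)])
              moreover have "x \<notin> mids G \<union> cens G"
              proof
                assume "x \<in> mids G \<union> cens G"
                hence "mu x = Suc n" by (rule good_new_mu[OF gG])
                thus False using x(1) by simp
              qed
              ultimately show ?thesis by blast
            qed
            show False by (rule CL4[OF gG old[OF sa F0(2)] old[OF sb F0(3)] assms(2) F1 F0(2,3)])
          qed
          thus ?thesis by (metis card.empty zero_le)
        qed
      qed
    qed
  qed
qed

lemma Inv_0: "Inv 0"
proof -
  have K0: "Kn 0 = {F0}" by (simp add: Kn_def)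
  have g: "good 0 F0" unfolding F0_def by (simp add: upt_rec good_explicit)
  have c1: "card {F\<in>Kn 0. P F} \<le> 1" for P unfolding K0 by (rule card_le1I) auto
  show ?thesis unfolding Inv_def
  proof (intro conjI allI impI ballI)
    show "finite (Kn 0)" unfolding K0 by simp
  next
    fix F assume "F \<in> Kn 0" thus "good 0 F" using g K0 by simp
  next
    fix v show "card {F\<in>Kn 0. v \<in> set F} \<le> 36" by (rule le_trans[OF c1]) simp
  next
    fix a b :: vx show "card {F\<in>Kn 0. a \<in> set F \<and> b \<in> set F} \<le> 6" by (rule le_trans[OF c1]) simp
  qed
qed

lemma Inv_Suc:
  assumes "Inv n" shows "Inv (Suc n)"
proof -
  note fin = Inv_parts(1)[OF assms] and gd = Inv_parts(2)[OF assms]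
  have "finite (Kn (Suc n))" unfolding Kn_Suc omega_def using fin omega_face_finite by simp
  moreover have "\<forall>F\<in>Kn (Suc n). good (Suc n) F"
  proof
    fix F assume "F \<in> Kn (Suc n)"
    then obtain G where G: "G \<in> Kn n" "F \<in> omega_face G" unfolding Kn_Suc omega_def by blast
    obtain a0 a1 a2 a3 a4 where GG: "G = [a0,a1,a2,a3,a4]" using good_split gd G(1) by blast
    have g1: "good n [a0,a1,a2,a3,a4]" using gd G(1) GG by simp
    have g2: "F \<in> omega_face [a0,a1,a2,a3,a4]" using G(2) GG by simp
    show "good (Suc n) F" by (rule good_step[OF g1 g2])
  qed
  ultimately show ?thesis unfolding Inv_def using VS[OF assms] PS[OF assms] by simp
qed

lemma Inv_all: "Inv n"
  by (induction n) (simp_all add: Inv_0 Inv_Suc)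


lemma rho_not_Base: "rho z \<noteq> Base i" by (cases z) auto

lemma map_rho_ne_F0: "map rho L \<noteq> F0"
proof
  assume "map rho L = F0"
  hence "Base 0 \<in> set (map rho L)" unfolding F0_def by (simp add: upt_rec)
  thus False using rho_not_Base by (metis imageE set_map)
qed

lemma map_inj_aux: "(\<forall>x\<in>set L. \<forall>y. f x = f y \<longrightarrow> x = y) \<Longrightarrow> map f L = map f L' \<Longrightarrow> L = L'"
proof (induction L arbitrary: L')
  case Nil thus ?case by simp
next
  case (Cons a L) thus ?case by (cases L') auto
qed

lemma fimage_inj_aux:
  assumes "\<forall>x\<in>fset S. \<forall>y. f x = f y \<longrightarrow> x = y" "fimage f S = fimage f S'"
  shows "S = S'"
proof -
  have "fset S = fset S'"
  proof
    show "fset S \<subseteq> fset S'"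
    proof
      fix x assume x: "x \<in> fset S"
      hence "f x \<in> f ` fset S'" using assms(2) by (metis fimage.rep_eq image_eqI)
      then obtain z where "z \<in> fset S'" "f x = f z" by blast
      thus "x \<in> fset S'" using assms(1) x by metis
    qed
  next
    show "fset S' \<subseteq> fset S"
    proof
      fix z assume z: "z \<in> fset S'"
      hence "f z \<in> f ` fset S" using assms(2) by (metis fimage.rep_eq image_eqI)
      then obtain x where "x \<in> fset S" "f z = f x" by blast
      thus "z \<in> fset S" using assms(1) z by metis
    qed
  qed
  thus ?thesis by (simp add: fset_inject)
qed

lemma rho_inj_aux: "\<forall>y. rho x = rho y \<longrightarrow> x = y"
proof (induction x)
  case (Base i)
  show ?case
  proof (intro allI impI)
    fix y assume e: "rho (Base i) = rho y"
    show "Base i = y"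
    proof (cases y)
      case (Base j) thus ?thesis using e by simp
    next
      case (Mid S) thus ?thesis using e by simp
    next
      case (Cen L k)
      hence "map rho L = F0" using e by simp
      hence "Base 0 \<in> set (map rho L)" unfolding F0_def by (simp add: upt_rec)
      thus ?thesis using rho_not_Base by (metis imageE set_map)
    qed
  qed
next
  case (Mid S)
  show ?case
  proof (intro allI impI)
    fix y assume e: "rho (Mid S) = rho y"
    then obtain S' where y: "y = Mid S'" by (cases y) auto
    have "fimage rho S = fimage rho S'" using e y by simp
    thus "Mid S = y" using fimage_inj_aux[of S rho S'] Mid y by blast
  qed
next
  case (Cen L k)
  show ?case
  proof (intro allI impI)
    fix y assume e: "rho (Cen L k) = rho y"
    have "\<exists>L' k'. y = Cen L' k'"
    proof (cases y)
      case (Base j)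
      hence "rho (Cen L k) = rho (Base j)" using e by simp
      hence "map rho L = F0 \<and> k = j" by (simp only: rho.simps vx.inject)
      thus ?thesis using map_rho_ne_F0 by blast
    next
      case (Mid S) thus ?thesis using e by simp
    next
      case (Cen L' k') thus ?thesis by blast
    qed
    then obtain L' k' where y: "y = Cen L' k'" by blast
    have "map rho L = map rho L'" "k = k'" using e y by simp_all
    thus "Cen L k = y" using map_inj_aux[of L rho L'] Cen y by blast
  qed
qed

lemma inj_rho: "inj rho"
  using rho_inj_aux by (auto intro: injI)


lemma F0_explicit: "F0 = [Base 0, Base 1, Base 2, Base 3, Base 4]"
  by (simp add: F0_def upt_rec)

lemma rho_Mid2: "rho (Mid {|a,b|}) = Mid {|rho a, rho b|}" by simp
lemma rho_fimg2: "rho |`| {|a,b|} = {|rho a, rho b|}" by simp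

lemma rho_omega: "map rho ` omega_face [a0,a1,a2,a3,a4] = omega_face [rho a0, rho a1, rho a2, rho a3, rho a4]"
  unfolding omega_face_explicit by (simp only: image_insert image_empty list.map rho_fimg2 rho.simps)

lemma Kn0: "Kn 0 = {F0}" by (simp add: Kn_def)

lemma Kn_rho: "F \<in> Kn n \<Longrightarrow> map rho F \<in> Kn (Suc n)"
proof (induction n arbitrary: F)
  case 0
  hence F: "F = F0" by (simp add: Kn0)
  have "map rho F0 \<in> omega_face F0"
    by (simp add: omega_face_def Let_def F0_def upt_rec)
  thus ?case using F by (simp add: Kn_Suc Kn0 omega_def)
next
  case (Suc n)
  from Suc.prems obtain G where G: "G \<in> Kn n" "F \<in> omega_face G" unfolding Kn_Suc omega_def by blast
  have "good n G" using Inv_parts(2)[OF Inv_all] G(1) by blast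
  then obtain a0 a1 a2 a3 a4 where GG: "G = [a0,a1,a2,a3,a4]" using good_split by blast
  have IH: "map rho G \<in> Kn (Suc n)" by (rule Suc.IH[OF G(1)])
  have "map rho F \<in> map rho ` omega_face G" using G(2) by blast
  also have "\<dots> = omega_face (map rho G)" unfolding GG rho_omega by simp
  finally show ?case using IH unfolding Kn_Suc[of "Suc n"] omega_def by blast
qed

lemma Kn_rhok: "F \<in> Kn n \<Longrightarrow> map (rho ^^ k) F \<in> Kn (n + k)"
proof (induction k)
  case 0 thus ?case by simp
next
  case (Suc k)
  have e: "map (rho ^^ Suc k) F = map rho (map (rho ^^ k) F)" by simp
  show ?case unfolding e using Kn_rho[OF Suc.IH[OF Suc.prems]] by (simp only: add_Suc_right)
qed

lemma funpow_comm: "(f ^^ a) ((f ^^ k) u) = (f ^^ k) ((f ^^ a) u)"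
  by (metis comp_apply funpow_add add.commute)

lemma inj_rhok: "inj (rho ^^ k)" using inj_fn[OF inj_rho] .

lemma Kcls_lift: "Kcls n u = Kcls (n + k) ((rho ^^ k) u)"
proof -
  have "(rho ^^ a) u = (rho ^^ n) s \<longleftrightarrow> (rho ^^ a) ((rho ^^ k) u) = (rho ^^ (n + k)) s" for a s
  proof -
    have "(rho ^^ (n + k)) s = (rho ^^ k) ((rho ^^ n) s)" by (metis comp_apply funpow_add add.commute)
    moreover have "(rho ^^ a) ((rho ^^ k) u) = (rho ^^ k) ((rho ^^ a) u)" by (rule funpow_comm)
    ultimately show ?thesis using inj_rhok[of k] by (simp add: inj_eq)
  qed
  thus ?thesis unfolding Kcls_def lim_eq_def by auto
qed

lemma Kcls_inj: "Kcls M a = Kcls M b \<Longrightarrow> a = b"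
proof -
  assume e: "Kcls M a = Kcls M b"
  have "(M, b) \<in> Kcls M b" unfolding Kcls_def lim_eq_def by simp
  hence "(M, b) \<in> Kcls M a" using e by simp
  hence "(rho ^^ M) a = (rho ^^ M) b" unfolding Kcls_def lim_eq_def by simp
  thus "a = b" using inj_rhok[of M] by (simp add: inj_eq)
qed

lemma KF_lift:
  assumes "G \<in> Kn m" "m \<le> M"
  shows "map (rho ^^ (M - m)) G \<in> Kn M" "map (Kcls m) G = map (Kcls M) (map (rho ^^ (M - m)) G)"
proof -
  show "map (rho ^^ (M - m)) G \<in> Kn M" using Kn_rhok[OF assms(1), of "M - m"] assms(2) by simp
  show "map (Kcls m) G = map (Kcls M) (map (rho ^^ (M - m)) G)"
    using Kcls_lift[of m _ "M - m"] assms(2) by simp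
qed

lemma KF_len: "A \<in> KF \<Longrightarrow> length A = 5"
proof -
  assume "A \<in> KF"
  then obtain n F where F: "F \<in> Kn n" "A = map (Kcls n) F" unfolding KF_def by blast
  have "good n F" using Inv_parts(2)[OF Inv_all] F(1) by blast
  thus ?thesis using F(2) good_len by simp
qed

lemma KF_deg_fin:
  assumes T: "finite T" "T \<subseteq> {A\<in>KF. x \<in> set A}"
  shows "card T \<le> 36"
proof (cases "T = {}")
  case True thus ?thesis by simp
next
  case False
  then obtain A0 where A0: "A0 \<in> T" by blast
  then obtain n0 G0 where G0: "G0 \<in> Kn n0" "A0 = map (Kcls n0) G0" "x \<in> set A0" using T(2) unfolding KF_def by blast
  then obtain v0 where v0: "x = Kcls n0 v0" by auto
  have "\<forall>A\<in>T. \<exists>m. \<exists>G. G \<in> Kn m \<and> A = map (Kcls m) G" using T(2) unfolding KF_def by blast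
  from bchoice[OF this] obtain lv where lv: "\<forall>A\<in>T. \<exists>G. G \<in> Kn (lv A) \<and> A = map (Kcls (lv A)) G" by blast
  define M where "M = max n0 (Max (lv ` T))"
  have lvM: "lv A \<le> M" if "A \<in> T" for A using that T(1) unfolding M_def by (simp add: max.coboundedI2)
  define w where "w = (rho ^^ (M - n0)) v0"
  have xw: "x = Kcls M w" unfolding w_def v0 using Kcls_lift[of n0 v0 "M - n0"] unfolding M_def by simp
  have sub: "T \<subseteq> map (Kcls M) ` {G\<in>Kn M. w \<in> set G}"
  proof
    fix A assume A: "A \<in> T"
    then obtain G where G: "G \<in> Kn (lv A)" "A = map (Kcls (lv A)) G" using lv by blast
    define G' where "G' = map (rho ^^ (M - lv A)) G"
    have G': "G' \<in> Kn M" "A = map (Kcls M) G'" using KF_lift[OF G(1) lvM[OF A]] G(2) unfolding G'_def by simp_all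
    have "x \<in> set A" using A T(2) by blast
    then obtain g where g: "g \<in> set G'" "x = Kcls M g" using G'(2) by auto
    have "Kcls M g = Kcls M w" using g(2) xw by simp
    hence "g = w" by (rule Kcls_inj)
    thus "A \<in> map (Kcls M) ` {G\<in>Kn M. w \<in> set G}" using G' g(1) by blast
  qed
  have finM: "finite (Kn M)" using Inv_parts(1)[OF Inv_all] .
  have "card T \<le> card (map (Kcls M) ` {G\<in>Kn M. w \<in> set G})" using sub finM by (intro card_mono) auto
  also have "\<dots> \<le> card {G\<in>Kn M. w \<in> set G}" by (rule card_image_le) (use finM in simp)
  also have "\<dots> \<le> 36" using Inv_parts(3)[OF Inv_all] by blast
  finally show ?thesis .
qed

lemma KF_deg:
  shows "finite {A\<in>KF. x \<in> set A}" "card {A\<in>KF. x \<in> set A} \<le> 36"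
proof -
  show fin: "finite {A\<in>KF. x \<in> set A}"
  proof (rule ccontr)
    assume "infinite {A\<in>KF. x \<in> set A}"
    then obtain T where T: "finite T" "card T = 37" "T \<subseteq> {A\<in>KF. x \<in> set A}"
      using infinite_arbitrarily_large by blast
    have "card T \<le> 36" by (rule KF_deg_fin[OF T(1,3)])
    thus False using T(2) by simp
  qed
  show "card {A\<in>KF. x \<in> set A} \<le> 36" by (rule KF_deg_fin[OF fin, of x]) simp
qed


primrec kball :: "kvert \<Rightarrow> nat \<Rightarrow> kvert set" where
  "kball u 0 = {u}"
| "kball u (Suc k) = kball u k \<union> (\<Union>x\<in>kball u k. \<Union>A\<in>{A\<in>KF. x \<in> set A}. set A)"

lemma kball_fin_card: "finite (kball u k) \<and> card (kball u k) \<le> 181 ^ k"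
proof (induction k)
  case 0 thus ?case by simp
next
  case (Suc k)
  let ?B = "kball u k"
  let ?U = "\<Union>x\<in>?B. \<Union>A\<in>{A\<in>KF. x \<in> set A}. set A"
  have fB: "finite ?B" and cB: "card ?B \<le> 181 ^ k" using Suc.IH by blast+
  have fU: "finite ?U" using fB KF_deg(1) by simp
  have cx: "card (\<Union>A\<in>{A\<in>KF. x \<in> set A}. set A) \<le> 180" for x
  proof -
    have "card (\<Union>A\<in>{A\<in>KF. x \<in> set A}. set A) \<le> (\<Sum>A\<in>{A\<in>KF. x \<in> set A}. card (set A))"
      by (rule card_UN_le[OF KF_deg(1)])
    also have "\<dots> \<le> (\<Sum>A\<in>{A\<in>KF. x \<in> set A}. 5)"
    proof (rule sum_mono)
      fix A assume "A \<in> {A\<in>KF. x \<in> set A}"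
      hence "length A = 5" using KF_len by blast
      thus "card (set A) \<le> 5" using card_length[of A] by simp
    qed
    also have "\<dots> = 5 * card {A\<in>KF. x \<in> set A}" by simp
    also have "\<dots> \<le> 5 * 36" using KF_deg(2)[of x] by simp
    finally show ?thesis by simp
  qed
  have "card ?U \<le> (\<Sum>x\<in>?B. card (\<Union>A\<in>{A\<in>KF. x \<in> set A}. set A))" by (rule card_UN_le[OF fB])
  also have "\<dots> \<le> (\<Sum>x\<in>?B. 180)" by (rule sum_mono) (rule cx)
  also have "\<dots> = 180 * card ?B" by simp
  finally have cU: "card ?U \<le> 180 * card ?B" .
  have "card (kball u (Suc k)) \<le> card ?B + card ?U" by (simp add: card_Un_le)
  also have "\<dots> \<le> 181 * card ?B" using cU by simp
  also have "\<dots> \<le> 181 * 181 ^ k" using cB by simp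
  finally show ?case using fB fU by simp
qed

lemma kball_mono: "k \<le> k' \<Longrightarrow> kball u k \<subseteq> kball u k'"
proof (induction k' )
  case 0 thus ?case by simp
next
  case (Suc k') thus ?case by (cases "k = Suc k'") auto
qed

lemma KE_face: "{a,b} \<in> KE \<Longrightarrow> \<exists>A\<in>KF. a \<in> set A \<and> b \<in> set A"
proof -
  assume "{a,b} \<in> KE"
  then obtain A i where A: "A \<in> KF" "i < 5" "{a,b} = {A ! i, A ! ((i + 1) mod 5)}"
    unfolding KE_def face_edges_def by blast
  have l: "length A = 5" using KF_len A(1) by blast
  have "A ! i \<in> set A" "A ! ((i + 1) mod 5) \<in> set A" using l A(2) by simp_all
  moreover have "a \<in> {A ! i, A ! ((i + 1) mod 5)}" "b \<in> {A ! i, A ! ((i + 1) mod 5)}" using A(3) by blast+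
  ultimately show ?thesis using A(1) by blast
qed

lemma walk_kball:
  assumes "kwalk xs" "xs \<noteq> []" "hd xs = u"
  shows "i < length xs \<Longrightarrow> xs ! i \<in> kball u i"
proof (induction i)
  case 0 thus ?case using assms(2,3) by (simp add: hd_conv_nth)
next
  case (Suc i)
  have e: "{xs ! i, xs ! Suc i} \<in> KE" using assms(1) Suc.prems unfolding kwalk_def by blast
  obtain A where A: "A \<in> KF" "xs ! i \<in> set A" "xs ! Suc i \<in> set A" using KE_face[OF e] by blast
  have "xs ! i \<in> kball u i" using Suc.IH Suc.prems by simp
  thus ?case using A by auto
qed

lemma kdist_kball:
  assumes "\<exists>xs. kwalk xs \<and> xs \<noteq> [] \<and> hd xs = u \<and> last xs = w"
  shows "w \<in> kball u (kdist u w)"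
proof -
  let ?P = "\<lambda>k. \<exists>xs. kwalk xs \<and> xs \<noteq> [] \<and> hd xs = u \<and> last xs = w \<and> length xs = Suc k"
  from assms obtain xs where xs: "kwalk xs" "xs \<noteq> []" "hd xs = u" "last xs = w" by blast
  have "?P (length xs - 1)" using xs by (intro exI[of _ xs]) auto
  hence "?P (kdist u w)" unfolding kdist_def by (rule LeastI)
  then obtain ys where ys: "kwalk ys" "ys \<noteq> []" "hd ys = u" "last ys = w" "length ys = Suc (kdist u w)" by blast
  have "ys ! kdist u w \<in> kball u (kdist u w)" using walk_kball[OF ys(1-3)] ys(5) by simp
  moreover have "last ys = ys ! kdist u w" using ys(2,5) by (simp add: last_conv_nth)
  ultimately show ?thesis using ys(4) by simp
qed

definition Erel :: "(kvert \<times> kvert) set" where "Erel = {(x,y). {x,y} \<in> KE}"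

lemma rtr_walk: "(x,y) \<in> Erel\<^sup>* \<Longrightarrow> \<exists>xs. kwalk xs \<and> xs \<noteq> [] \<and> hd xs = x \<and> last xs = y"
proof (induction rule: rtrancl_induct)
  case base show ?case by (intro exI[of _ "[x]"]) (simp add: kwalk_def)
next
  case (step y z)
  then obtain xs where xs: "kwalk xs" "xs \<noteq> []" "hd xs = x" "last xs = y" by blast
  have yz: "{y,z} \<in> KE" using step(2) unfolding Erel_def by simp
  have "kwalk (xs @ [z])" unfolding kwalk_def
  proof (intro allI impI)
    fix i assume i: "Suc i < length (xs @ [z])"
    show "{(xs @ [z]) ! i, (xs @ [z]) ! Suc i} \<in> KE"
    proof (cases "Suc i < length xs")
      case True thus ?thesis using xs(1) unfolding kwalk_def by (simp add: nth_append)
    next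
      case False
      hence "Suc i = length xs" using i by simp
      moreover have "xs ! i = y" using xs(2,4) \<open>Suc i = length xs\<close> by (metis last_conv_nth diff_Suc_1)
      ultimately show ?thesis using yz by (simp add: nth_append)
    qed
  qed
  thus ?case using xs by (intro exI[of _ "xs @ [z]"]) auto
qed

lemma Erel_sym: "(x,y) \<in> Erel\<^sup>* \<Longrightarrow> (y,x) \<in> Erel\<^sup>*"
proof -
  have c: "Erel\<inverse> = Erel" unfolding Erel_def by (auto simp: insert_commute)
  assume "(x,y) \<in> Erel\<^sup>*"
  hence "(y,x) \<in> (Erel\<^sup>*)\<inverse>" by simp
  thus ?thesis by (simp add: rtrancl_converse[symmetric] c)
qed

lemma face_conn0: "A \<in> KF \<Longrightarrow> i < 5 \<Longrightarrow> (A ! 0, A ! i) \<in> Erel\<^sup>*"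
proof (induction i)
  case 0 thus ?case by simp
next
  case (Suc i)
  have "{A ! i, A ! ((i + 1) mod 5)} \<in> face_edges A" using Suc.prems unfolding face_edges_def by auto
  hence "{A ! i, A ! Suc i} \<in> KE" using Suc.prems unfolding KE_def by auto
  hence "(A ! i, A ! Suc i) \<in> Erel" unfolding Erel_def by simp
  thus ?case using Suc by (meson Suc_lessD rtrancl.rtrancl_into_rtrancl)
qed

lemma face_conn: "A \<in> KF \<Longrightarrow> x \<in> set A \<Longrightarrow> y \<in> set A \<Longrightarrow> (x, y) \<in> Erel\<^sup>*"
proof -
  assume A: "A \<in> KF" "x \<in> set A" "y \<in> set A"
  have l: "length A = 5" using KF_len A(1) by blast
  obtain i j where "i < 5" "x = A ! i" "j < 5" "y = A ! j" using A(2,3) l by (metis in_set_conv_nth)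
  thus ?thesis using face_conn0[OF A(1)] Erel_sym by (meson rtrancl_trans)
qed

lemma patch_conn:
  assumes P: "patch P" and AB: "A \<in> P" "B \<in> P" and x: "x \<in> set A" and y: "y \<in> set B"
  shows "(x, y) \<in> Erel\<^sup>*"
proof -
  have sub: "P \<subseteq> KF" using P unfolding patch_def by blast
  have "(A, B) \<in> {(X, Y). X \<in> P \<and> Y \<in> P \<and> face_adj X Y}\<^sup>*" using P AB unfolding patch_def by blast
  thus ?thesis using y
  proof (induction arbitrary: y rule: rtrancl_induct)
    case base thus ?case using face_conn sub AB(1) x by blast
  next
    case (step B' B)
    hence B': "B' \<in> P" "B \<in> P" "face_adj B' B" by auto
    then obtain e where e: "e \<in> face_edges B'" "e \<in> face_edges B" unfolding face_adj_def by blast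
    then obtain i where i: "i < 5" "e = {B' ! i, B' ! ((i + 1) mod 5)}" unfolding face_edges_def by blast
    obtain j where j: "j < 5" "e = {B ! j, B ! ((j + 1) mod 5)}" using e(2) unfolding face_edges_def by blast
    have lB': "length B' = 5" and lB: "length B = 5" using KF_len sub B' by blast+
    have p1: "B' ! i \<in> set B'" using i lB' by simp
    have "B' ! i \<in> {B ! j, B ! ((j + 1) mod 5)}" using i(2) j(2) by blast
    hence p2: "B' ! i \<in> set B" using j lB by auto
    have "(x, B' ! i) \<in> Erel\<^sup>*" using step.IH p1 by blast
    moreover have "(B' ! i, y) \<in> Erel\<^sup>*" using face_conn sub B'(2) p2 step.prems by blast
    ultimately show ?case by (rule rtrancl_trans)
  qed
qed


lemma face_edges_alt: "face_edges B = (\<lambda>i. {B ! i, B ! ((i + 1) mod 5)}) ` {..<5}"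
  unfolding face_edges_def by auto

lemma face_edges_map:
  assumes "length A = 5"
  shows "(\<lambda>e. f ` e) ` face_edges A = face_edges (map f A)"
proof -
  have "(\<lambda>e. f ` e) ` face_edges A = (\<lambda>i. f ` {A ! i, A ! ((i + 1) mod 5)}) ` {..<5}"
    unfolding face_edges_alt by (simp add: image_image)
  also have "\<dots> = (\<lambda>i. {map f A ! i, map f A ! ((i + 1) mod 5)}) ` {..<5}"
  proof (rule image_cong[OF refl])
    fix i assume "i \<in> {..<(5::nat)}"
    hence "i < 5" "(i + 1) mod 5 < 5" by simp_all
    thus "f ` {A ! i, A ! ((i + 1) mod 5)} = {map f A ! i, map f A ! ((i + 1) mod 5)}" using assms by simp
  qed
  also have "\<dots> = face_edges (map f A)" unfolding face_edges_alt ..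
  finally show ?thesis .
qed

definition enum :: "kvert list set \<Rightarrow> kvert \<Rightarrow> nat" where
  "enum P = (SOME g. bij_betw g (pverts P) {0..<card (pverts P)})"

definition code :: "kvert list set \<Rightarrow> nat list set" where
  "code P = map (enum P) ` P"

lemma enum_bij:
  assumes "finite (pverts P)" shows "bij_betw (enum P) (pverts P) {0..<card (pverts P)}"
  unfolding enum_def using ex_bij_betw_finite_nat[OF assms] by (rule someI_ex)

lemma code_img: "\<Union> (set ` code P) = enum P ` pverts P"
  unfolding code_def pverts_def by auto

lemma code_iso:
  assumes fP: "finite (pverts P)" and fQ: "finite (pverts Q)" and c: "code P = code Q"
    and lP: "\<forall>A\<in>P. length A = 5"
  shows "patch_iso P Q"
proof -
  let ?g = "enum P" and ?h = "enum Q"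
  have bg: "bij_betw ?g (pverts P) {0..<card (pverts P)}" by (rule enum_bij[OF fP])
  have bh: "bij_betw ?h (pverts Q) {0..<card (pverts Q)}" by (rule enum_bij[OF fQ])
  have "{0..<card (pverts P)} = {0..<card (pverts Q)}"
    using code_img[of P] code_img[of Q] c bg bh by (simp add: bij_betw_def)
  hence bh': "bij_betw ?h (pverts Q) {0..<card (pverts P)}" using bh by simp
  define f where "f = inv_into (pverts Q) ?h \<circ> ?g"
  have bf: "bij_betw f (pverts P) (pverts Q)" unfolding f_def
    by (rule bij_betw_trans[OF bg bij_betw_inv_into[OF bh']])
  have injh: "inj_on ?h (pverts Q)" using bh bij_betw_def by blast
  have mQ: "map (inv_into (pverts Q) ?h) (map ?h B) = B" if "B \<in> Q" for B
  proof -
    have "set B \<subseteq> pverts Q" using that unfolding pverts_def by blast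
    hence "\<forall>x\<in>set B. inv_into (pverts Q) ?h (?h x) = x" using inv_into_f_f[OF injh] by blast
    thus ?thesis by (simp add: map_idI)
  qed
  have mP: "map f ` P = Q"
  proof -
    have "map f ` P = map (inv_into (pverts Q) ?h) ` (map ?g ` P)" unfolding f_def by (simp add: image_image)
    also have "map ?g ` P = map ?h ` Q" using c unfolding code_def .
    also have "map (inv_into (pverts Q) ?h) ` (map ?h ` Q) = Q" using mQ by (force simp: image_image)
    finally show ?thesis .
  qed
  have e1: "(\<lambda>e. f ` e) ` pedges P = pedges Q"
  proof -
    have "(\<lambda>e. f ` e) ` pedges P = (\<Union>A\<in>P. (\<lambda>e. f ` e) ` face_edges A)" unfolding pedges_def by auto
    also have "\<dots> = (\<Union>A\<in>P. face_edges (map f A))" using face_edges_map lP by simp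
    also have "\<dots> = pedges Q" unfolding pedges_def mP[symmetric] by simp
    finally show ?thesis .
  qed
  have e2: "(\<lambda>A. f ` set A) ` P = set ` Q"
    unfolding mP[symmetric] by (simp add: image_image)
  show ?thesis unfolding patch_iso_def using bf e1 e2 by blast
qed


lemma pat_bound:
  assumes P: "patch P" and d: "ediam_lt P r"
  shows "finite (pverts P) \<and> card (pverts P) \<le> 181 ^ nat \<lceil>r\<rceil> \<and> (\<forall>A\<in>P. length A = 5)"
proof -
  have sub: "P \<subseteq> KF" and ne: "P \<noteq> {}" using P unfolding patch_def by blast+
  have l5: "\<forall>A\<in>P. length A = 5" using sub KF_len by blast
  obtain A0 where A0: "A0 \<in> P" using ne by blast
  define u where "u = A0 ! 0"
  have uA0: "u \<in> set A0" unfolding u_def using l5 A0 by simp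
  have uP: "u \<in> pverts P" using uA0 A0 unfolding pverts_def by blast
  have ball: "pverts P \<subseteq> kball u (nat \<lceil>r\<rceil>)"
  proof
    fix w assume w: "w \<in> pverts P"
    then obtain B where B: "B \<in> P" "w \<in> set B" unfolding pverts_def by blast
    have "(u, w) \<in> Erel\<^sup>*" by (rule patch_conn[OF P A0 B(1) uA0 B(2)])
    hence "w \<in> kball u (kdist u w)" using rtr_walk kdist_kball by blast
    moreover have "real (kdist u w) < r" using d uP w unfolding ediam_lt_def by blast
    hence "kdist u w \<le> nat \<lceil>r\<rceil>" by linarith
    ultimately show "w \<in> kball u (nat \<lceil>r\<rceil>)" using kball_mono by blast
  qed
  have fb: "finite (kball u (nat \<lceil>r\<rceil>))" and cb: "card (kball u (nat \<lceil>r\<rceil>)) \<le> 181 ^ nat \<lceil>r\<rceil>"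
    using kball_fin_card by blast+
  have "finite (pverts P)" using ball fb finite_subset by blast
  moreover have "card (pverts P) \<le> 181 ^ nat \<lceil>r\<rceil>" using card_mono[OF fb ball] cb by linarith
  ultimately show ?thesis using l5 by blast
qed

theorem theoremt:
  fixes r :: real
  assumes "r > 0"
  shows "\<exists>S. finite S \<and> (\<forall>Q\<in>S. patch Q \<and> ediam_lt Q r) \<and>
           (\<forall>P. patch P \<and> ediam_lt P r \<longrightarrow> (\<exists>Q\<in>S. patch_iso P Q))"
proof -
  define N where "N = (181::nat) ^ nat \<lceil>r\<rceil>"
  define Pat where "Pat = {P. patch P \<and> ediam_lt P r}"
  define Ls where "Ls = {xs. set xs \<subseteq> {..<N} \<and> length xs = 5}"
  have fLs: "finite Ls" unfolding Ls_def by (rule finite_lists_length_eq) simp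
  have codeLs: "code P \<subseteq> Ls" if "P \<in> Pat" for P
  proof
    fix c assume c: "c \<in> code P"
    then obtain A where A: "A \<in> P" "c = map (enum P) A" unfolding code_def by blast
    have pb: "finite (pverts P) \<and> card (pverts P) \<le> N \<and> (\<forall>A\<in>P. length A = 5)"
      using pat_bound that unfolding Pat_def N_def by blast
    have bg: "bij_betw (enum P) (pverts P) {0..<card (pverts P)}" using enum_bij pb by blast
    have "set A \<subseteq> pverts P" using A(1) unfolding pverts_def by blast
    hence "enum P ` set A \<subseteq> {0..<card (pverts P)}" using bg unfolding bij_betw_def by blast
    hence "set c \<subseteq> {..<N}" using A(2) pb by auto
    moreover have "length c = 5" using A pb by simp
    ultimately show "c \<in> Ls" unfolding Ls_def by blast
  qed
  have fC: "finite (code ` Pat)"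
  proof (rule finite_subset[OF _ finite_Pow_iff[THEN iffD2, OF fLs]])
    show "code ` Pat \<subseteq> Pow Ls" using codeLs by blast
  qed
  define pick where "pick c = (SOME P. P \<in> Pat \<and> code P = c)" for c
  define S where "S = pick ` (code ` Pat)"
  have pickP: "pick (code P) \<in> Pat \<and> code (pick (code P)) = code P" if "P \<in> Pat" for P
    unfolding pick_def by (rule someI[of _ P]) (use that in simp)
  have "finite S" unfolding S_def using fC by simp
  moreover have "\<forall>Q\<in>S. patch Q \<and> ediam_lt Q r"
  proof
    fix Q assume "Q \<in> S"
    then obtain P where "P \<in> Pat" "Q = pick (code P)" unfolding S_def by blast
    thus "patch Q \<and> ediam_lt Q r" using pickP unfolding Pat_def by blast
  qed
  moreover have "\<forall>P. patch P \<and> ediam_lt P r \<longrightarrow> (\<exists>Q\<in>S. patch_iso P Q)"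
  proof (intro allI impI)
    fix P assume P: "patch P \<and> ediam_lt P r"
    hence PP: "P \<in> Pat" unfolding Pat_def by blast
    define Q where "Q = pick (code P)"
    have Q: "Q \<in> Pat" "code Q = code P" using pickP[OF PP] unfolding Q_def by blast+
    have b1: "finite (pverts P) \<and> (\<forall>A\<in>P. length A = 5)" using pat_bound P by blast
    have b2: "finite (pverts Q)" using pat_bound Q(1) unfolding Pat_def by blast
    have "patch_iso P Q" using code_iso[of P Q] b1 b2 Q(2) by simp
    moreover have "Q \<in> S" unfolding S_def Q_def using PP by blast
    ultimately show "\<exists>Q\<in>S. patch_iso P Q" by blast
  qed
  ultimately show ?thesis by blast
qed


end
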